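(* In the setting of the context, suppose that $\rho:=\rho_{\mathcal A_\nu,\mathcal S_{\log},\pi_{\log}}$ is proper, convex, and lower semicontinuous with respect to $\tau_{\log}$. Then for all $X\in\mathcal C$, $$\eta_{\mathfrak R}(X)=\sup_{\varphi\in\mathcal D_{\ge1}}\exp\Big(\varphi(X)-\sup_{Y\in\mathcal B_{\tilde\rho}}\varphi(Y)-\sup_{Z\in\mathcal S}\big(\varphi(Z)-\log\pi(Z)\big)\Big),$$ where $\mathcal D_{\ge1}$ is the set of all log-linear $\tau$-continuous $\varphi\colon\mathcal C\to\mathbb R$ such that $\varphi(X)\ge0$ for all $X\in\mathcal C\cap\mathcal K$ with $X\ge1$ a.s.
   Context: Probability space $(\Omega,\mathcal F,P)$; $L^0_{++}$ = a.s. strictly positive random variables; $L^\infty_{++}=L^\infty\cap L^0_{++}$; $\frac{\mathcal A}{\mathcal D}=\{AD^{-1}\}$. Setting: nonempty $\mathcal C,\mathcal S,\mathcal K\subset L^0_{++}$ with $\frac{\mathcal C}{\mathcal S}\subset\mathcal K$, $\mathcal K$ a cone, $(\mathcal C,\cdot)$ a group, and (so that all expressions are defined) $\mathcal K\subset\mathcal C$ and $\mathcal S\subset\mathcal C$; pricing map $\pi\colon\mathcal S\to(0,\infty)$. $\mathcal C_{\log},\mathcal S_{\log},\mathcal K_{\log}$ are the images under $\log$. $\mathcal C_{\log}$ is equipped with a topology $\tau_{\log}$ making it a locally convex topological vector space; $\mathcal C$ carries $\tau=\{\exp(U):U\in\tau_{\log}\}$, so $\exp$ is a homeomorphism. A map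 $\varphi\colon\mathcal C\to\mathbb R$ is log-linear if $\varphi(X^\alpha Y^\beta)=\alpha\varphi(X)+\beta\varphi(Y)$ for $X,Y\in\mathcal C$, $\alpha,\beta\in\mathbb R$; equivalently the log-linear $\tau$-continuous maps are exactly $\psi\circ\log$ with $\psi$ in the topological dual of $\mathcal C_{\log}$. A return risk measure (RRM), with $L^\infty_{++}\subset\mathcal K$, is a positively homogeneous nondecreasing $\tilde\rho\colon\mathcal K\to(0,\infty)$ with $\tilde\rho(1)=1$; $\mathcal B_{\tilde\rho}=\{K\in\mathcal K:\tilde\rho(K)\le1\}$; $\mathfrak R=(\mathcal B_{\tilde\rho},\mathcal S,\pi)$; MARRM $\eta_{\mathfrak R}(X)=\inf\{\pi(Z):Z\in\mathcal S,\ X/Z\in\mathcal B_{\tilde\rho}\}$. Further $\nu=\log\circ\tilde\rho\circ\exp$, $\mathcal A_\nu=\{Y\in\mathcal K_{\log}:\nu(Y)\le0\}$, $\pi_{\log}=\log\circ\pi\circ\exp$ on $\mathcal S_{\log}$, and $\rho_{\mathcal A_\nu,\mathcal S_{\log},\pi_{\log}}(X_{\log})=\inf\{\pi_{\log}(L):L\in\mathcal S_{\log},\ X_{\log}-L\in\mathcal A_\nu\}$ on $\mathcal C_{\log}$. Proper means: never $-\infty$ and finite at some point. Conventions $\exp(-\infty)=0$, $\exp(\infty)=\infty$. *)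

theory Defs
  imports "HOL-Probability.Probability"
begin

text \<open>Random variables are real-valued functions on the sample space; elements of
  L0_{++} are represented by measurable, (everywhere) strictly positive representatives.\<close>

definition L0pp :: "'a measure \<Rightarrow> ('a \<Rightarrow> real) set" where
  "L0pp M = {X. X \<in> borel_measurable M \<and> (\<forall>\<omega>. 0 < X \<omega>)}"

definition Linfpp :: "'a measure \<Rightarrow> ('a \<Rightarrow> real) set" where
  "Linfpp M = {X \<in> L0pp M. \<exists>c. AE \<omega> in M. X \<omega> \<le> c}"

definition lnv :: "('a \<Rightarrow> real) \<Rightarrow> ('a \<Rightarrow> real)" where
  "lnv X = (\<lambda>\<omega>. ln (X \<omega>))"

definition expv :: "('a \<Rightarrow> real) \<Rightarrow> ('a \<Rightarrow> real)" where
  "expv X = (\<lambda>\<omega>. exp (X \<omega>))"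

fun eexp :: "ereal \<Rightarrow> ereal" where
  "eexp (ereal x) = ereal (exp x)"
| "eexp PInfty = PInfty"
| "eexp MInfty = 0"

definition lctvs :: "('a \<Rightarrow> real) set \<Rightarrow> ('a \<Rightarrow> real) topology \<Rightarrow> bool" where
  "lctvs V T \<longleftrightarrow>
     topspace T = V \<and>
     (\<lambda>\<omega>. 0) \<in> V \<and>
     (\<forall>f\<in>V. \<forall>g\<in>V. (\<lambda>\<omega>. f \<omega> + g \<omega>) \<in> V) \<and>
     (\<forall>a::real. \<forall>f\<in>V. (\<lambda>\<omega>. a * f \<omega>) \<in> V) \<and>
     continuous_map (prod_topology T T) T (\<lambda>(f, g). \<lambda>\<omega>. f \<omega> + g \<omega>) \<and>
     continuous_map (prod_topology euclideanreal T) T (\<lambda>(a, f). \<lambda>\<omega>. a * f \<omega>) \<and>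
     Hausdorff_space T \<and>
     (\<forall>x\<in>V. \<forall>U. openin T U \<and> x \<in> U \<longrightarrow>
        (\<exists>W. openin T W \<and> x \<in> W \<and> W \<subseteq> U \<and>
             (\<forall>f\<in>W. \<forall>g\<in>W. \<forall>t::real. 0 \<le> t \<and> t \<le> 1 \<longrightarrow>
                 (\<lambda>\<omega>. t * f \<omega> + (1 - t) * g \<omega>) \<in> W)))"

text \<open>The topology tau on C: the sets exp(U), U open in tau_log (equivalently
  the pullback of tau_log along the pointwise log on C).\<close>
definition tau_of :: "('a \<Rightarrow> real) set \<Rightarrow> ('a \<Rightarrow> real) topology \<Rightarrow> ('a \<Rightarrow> real) topology" where
  "tau_of C Tlog = pullback_topology C lnv Tlog"

definition log_linear :: "('a \<Rightarrow> real) set \<Rightarrow> (('a \<Rightarrow> real) \<Rightarrow> real) \<Rightarrow> bool" where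
  "log_linear C \<phi> \<longleftrightarrow> (\<forall>X\<in>C. \<forall>Y\<in>C. \<forall>\<alpha> \<beta>::real.
      \<phi> (\<lambda>\<omega>. X \<omega> powr \<alpha> * Y \<omega> powr \<beta>) = \<alpha> * \<phi> X + \<beta> * \<phi> Y)"

definition RRM :: "'a measure \<Rightarrow> ('a \<Rightarrow> real) set \<Rightarrow> (('a \<Rightarrow> real) \<Rightarrow> real) \<Rightarrow> bool" where
  "RRM M K \<rho>t \<longleftrightarrow> Linfpp M \<subseteq> K \<and>
     (\<forall>X\<in>K. 0 < \<rho>t X) \<and>
     (\<forall>X\<in>K. \<forall>l>0. \<rho>t (\<lambda>\<omega>. l * X \<omega>) = l * \<rho>t X) \<and>
     (\<forall>X\<in>K. \<forall>Y\<in>K. (AE \<omega> in M. X \<omega> \<le> Y \<omega>) \<longrightarrow> \<rho>t X \<le> \<rho>t Y) \<and>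
     \<rho>t (\<lambda>\<omega>. 1) = 1"

definition acc_set :: "('a \<Rightarrow> real) set \<Rightarrow> (('a \<Rightarrow> real) \<Rightarrow> real) \<Rightarrow> ('a \<Rightarrow> real) set" where
  "acc_set K \<rho>t = {X \<in> K. \<rho>t X \<le> 1}"

definition marrm :: "('a \<Rightarrow> real) set \<Rightarrow> ('a \<Rightarrow> real) set \<Rightarrow> (('a \<Rightarrow> real) \<Rightarrow> real)
     \<Rightarrow> ('a \<Rightarrow> real) \<Rightarrow> ereal" where
  "marrm B S \<pi> X = Inf {ereal (\<pi> Z) | Z. Z \<in> S \<and> (\<lambda>\<omega>. X \<omega> / Z \<omega>) \<in> B}"

definition rho_add :: "('a \<Rightarrow> real) set \<Rightarrow> ('a \<Rightarrow> real) set \<Rightarrow> (('a \<Rightarrow> real) \<Rightarrow> real)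
     \<Rightarrow> ('a \<Rightarrow> real) \<Rightarrow> ereal" where
  "rho_add A S \<pi> X = Inf {ereal (\<pi> L) | L. L \<in> S \<and> (\<lambda>\<omega>. X \<omega> - L \<omega>) \<in> A}"

definition proper_on :: "('a \<Rightarrow> real) set \<Rightarrow> (('a \<Rightarrow> real) \<Rightarrow> ereal) \<Rightarrow> bool" where
  "proper_on V f \<longleftrightarrow> (\<forall>x\<in>V. f x \<noteq> -\<infinity>) \<and> (\<exists>x\<in>V. f x \<noteq> \<infinity>)"

definition convex_on_ereal :: "('a \<Rightarrow> real) set \<Rightarrow> (('a \<Rightarrow> real) \<Rightarrow> ereal) \<Rightarrow> bool" where
  "convex_on_ereal V f \<longleftrightarrow> (\<forall>x\<in>V. \<forall>y\<in>V. \<forall>t::real. 0 < t \<and> t < 1 \<longrightarrow>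
      f (\<lambda>\<omega>. t * x \<omega> + (1 - t) * y \<omega>) \<le> ereal t * f x + ereal (1 - t) * f y)"

definition lsc_on :: "('a \<Rightarrow> real) topology \<Rightarrow> (('a \<Rightarrow> real) \<Rightarrow> ereal) \<Rightarrow> bool" where
  "lsc_on T f \<longleftrightarrow> (\<forall>c::real. closedin T {x \<in> topspace T. f x \<le> ereal c})"

end

theory Submission
  imports Defs "HOL-Library.Function_Algebras"
begin

definition subsp :: "'v::real_vector set \<Rightarrow> bool" where
  "subsp V \<longleftrightarrow> 0 \<in> V \<and> (\<forall>x\<in>V. \<forall>y\<in>V. x + y \<in> V) \<and> (\<forall>c. \<forall>x\<in>V. c *\<^sub>R x \<in> V)"

lemma subspD:
  assumes "subsp V"
  shows "0 \<in> V" "x \<in> V \<Longrightarrow> y \<in> V \<Longrightarrow> x + y \<in> V" "x \<in> V \<Longrightarrow> c *\<^sub>R x \<in> V"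
    "x \<in> V \<Longrightarrow> y \<in> V \<Longrightarrow> x - y \<in> V" "x \<in> V \<Longrightarrow> - x \<in> V"
proof -
  have m: "- z \<in> V" if "z \<in> V" for z
  proof -
    have "(-1) *\<^sub>R z \<in> V" using assms that unfolding subsp_def by blast
    then show ?thesis by simp
  qed
  show "0 \<in> V" "x \<in> V \<Longrightarrow> y \<in> V \<Longrightarrow> x + y \<in> V" "x \<in> V \<Longrightarrow> c *\<^sub>R x \<in> V"
    using assms by (auto simp: subsp_def)
  show "x \<in> V \<Longrightarrow> - x \<in> V" using m by blast
  show "x \<in> V \<Longrightarrow> y \<in> V \<Longrightarrow> x - y \<in> V"
  proof -
    assume "x \<in> V" "y \<in> V"
    then have "x + (- y) \<in> V" using assms m[of y] unfolding subsp_def by blast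
    then show ?thesis by simp
  qed
qed

definition sublin :: "'v::real_vector set \<Rightarrow> ('v \<Rightarrow> real) \<Rightarrow> bool" where
  "sublin V p \<longleftrightarrow> (\<forall>x\<in>V. \<forall>y\<in>V. p (x + y) \<le> p x + p y) \<and> (\<forall>x\<in>V. \<forall>t>0. p (t *\<^sub>R x) = t * p x)"

definition lin :: "'v::real_vector set \<Rightarrow> ('v \<Rightarrow> real) \<Rightarrow> bool" where
  "lin V f \<longleftrightarrow> (\<forall>x\<in>V. \<forall>y\<in>V. f (x + y) = f x + f y) \<and> (\<forall>x\<in>V. \<forall>c. f (c *\<^sub>R x) = c * f x)"

lemma linD:
  assumes "lin V f" "subsp V"
  shows "x \<in> V \<Longrightarrow> y \<in> V \<Longrightarrow> f (x + y) = f x + f y" "x \<in> V \<Longrightarrow> f (c *\<^sub>R x) = c * f x"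
    "x \<in> V \<Longrightarrow> y \<in> V \<Longrightarrow> f (x - y) = f x - f y" "x \<in> V \<Longrightarrow> f (- x) = - f x" "f 0 = 0"
proof -
  have a: "f (u + v) = f u + f v" if "u \<in> V" "v \<in> V" for u v
    using assms that by (auto simp: lin_def)
  have b: "f (k *\<^sub>R u) = k * f u" if "u \<in> V" for k u
    using assms that by (auto simp: lin_def)
  have m: "f (- u) = - f u" if "u \<in> V" for u using b[of u "-1"] that by simp
  show "x \<in> V \<Longrightarrow> y \<in> V \<Longrightarrow> f (x + y) = f x + f y" "x \<in> V \<Longrightarrow> f (c *\<^sub>R x) = c * f x"
    "x \<in> V \<Longrightarrow> f (- x) = - f x" using a b m by auto
  show "x \<in> V \<Longrightarrow> y \<in> V \<Longrightarrow> f (x - y) = f x - f y"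
    using a[of x "-y"] m[of y] subspD(5)[OF assms(2), of y] by simp
  show "f 0 = 0" using b[of 0 0] subspD(1)[OF assms(2)] by simp
qed

definition LG :: "'v::real_vector set \<Rightarrow> ('v \<Rightarrow> real) \<Rightarrow> 'v \<Rightarrow> ('v \<times> real) set \<Rightarrow> bool" where
  "LG V p x1 G \<longleftrightarrow> G \<subseteq> V \<times> UNIV \<and> (x1, 1) \<in> G \<and>
    (\<forall>x a y b. (x,a) \<in> G \<longrightarrow> (y,b) \<in> G \<longrightarrow> (x + y, a + b) \<in> G) \<and>
    (\<forall>x a c. (x,a) \<in> G \<longrightarrow> (c *\<^sub>R x, c * a) \<in> G) \<and>
    (\<forall>x a b. (x,a) \<in> G \<longrightarrow> (x,b) \<in> G \<longrightarrow> a = b) \<and>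
    (\<forall>x a. (x,a) \<in> G \<longrightarrow> a \<le> p x)"

lemma LGD:
  assumes "LG V p x1 G"
  shows "(u,a) \<in> G \<Longrightarrow> u \<in> V" "(x1,1) \<in> G"
    "(u,a) \<in> G \<Longrightarrow> (v,b) \<in> G \<Longrightarrow> (u + v, a + b) \<in> G"
    "(u,a) \<in> G \<Longrightarrow> (c *\<^sub>R u, c * a) \<in> G"
    "(u,a) \<in> G \<Longrightarrow> (u,b) \<in> G \<Longrightarrow> a = b"
    "(u,a) \<in> G \<Longrightarrow> a \<le> p u"
proof -
  note L = assms[unfolded LG_def]
  note A = conjunct1[OF L]
  note B = conjunct1[OF conjunct2[OF L]]
  note C = conjunct1[OF conjunct2[OF conjunct2[OF L]]]
  note D = conjunct1[OF conjunct2[OF conjunct2[OF conjunct2[OF L]]]]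
  note E = conjunct1[OF conjunct2[OF conjunct2[OF conjunct2[OF conjunct2[OF L]]]]]
  note F = conjunct2[OF conjunct2[OF conjunct2[OF conjunct2[OF conjunct2[OF L]]]]]
  show "(u,a) \<in> G \<Longrightarrow> u \<in> V" using A by blast
  show "(x1,1) \<in> G" by (rule B)
  show "(u,a) \<in> G \<Longrightarrow> (v,b) \<in> G \<Longrightarrow> (u + v, a + b) \<in> G" using C by simp
  show "(u,a) \<in> G \<Longrightarrow> (c *\<^sub>R u, c * a) \<in> G" using D by simp
  show "(u,a) \<in> G \<Longrightarrow> (u,b) \<in> G \<Longrightarrow> a = b" using E by simp
  show "(u,a) \<in> G \<Longrightarrow> a \<le> p u" using F by simp
qed

lemma LG_extend:
  assumes sub: "subsp V" and sl: "sublin V p" and G: "LG V p x1 G" and xV: "x \<in> V"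
    and xn: "x \<notin> fst ` G"
  shows "\<exists>G'. LG V p x1 G' \<and> G \<subseteq> G' \<and> G' \<noteq> G"
proof -
  have GV: "\<And>u a. (u,a) \<in> G \<Longrightarrow> u \<in> V" using G by (auto simp: LG_def)
  have Gadd: "\<And>u a v b. (u,a) \<in> G \<Longrightarrow> (v,b) \<in> G \<Longrightarrow> (u + v, a + b) \<in> G"
    using G by (auto simp: LG_def)
  have Gsc: "\<And>u a c. (u,a) \<in> G \<Longrightarrow> (c *\<^sub>R u, c * a) \<in> G"
    using G by (auto simp: LG_def)
  have Gfun: "\<And>u a b. (u,a) \<in> G \<Longrightarrow> (u,b) \<in> G \<Longrightarrow> a = b"
    using G by (auto simp: LG_def)
  have Gdom: "\<And>u a. (u,a) \<in> G \<Longrightarrow> a \<le> p u"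
    using G by (auto simp: LG_def)
  have G1: "(x1, 1) \<in> G" using G by (auto simp: LG_def)
  have G0: "(0, 0) \<in> G" using Gsc[OF G1, of 0] by simp
  have padd: "\<And>u v. u \<in> V \<Longrightarrow> v \<in> V \<Longrightarrow> p (u + v) \<le> p u + p v"
    using sl by (auto simp: sublin_def)
  have phom: "\<And>u t. u \<in> V \<Longrightarrow> t > 0 \<Longrightarrow> p (t *\<^sub>R u) = t * p u"
    using sl by (auto simp: sublin_def)
  define L where "L = {a - p (u - x) | u a. (u,a) \<in> G}"
  define c where "c = Sup L"
  have key: "a - p (u - x) \<le> p (v + x) - b" if "(u,a) \<in> G" "(v,b) \<in> G" for u a v b
  proof -
    have uv: "u \<in> V" "v \<in> V" using that GV by auto
    have "a + b \<le> p (u + v)" using Gdom[OF Gadd[OF that]] .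
    also have "u + v = (u - x) + (v + x)" by simp
    also have "p ((u - x) + (v + x)) \<le> p (u - x) + p (v + x)"
      using padd[of "u - x" "v + x"] subspD(2,4)[OF sub] uv xV by simp
    finally show ?thesis by linarith
  qed
  have Lne: "L \<noteq> {}" using G0 by (auto simp: L_def)
  have bdd: "bdd_above L"
    unfolding bdd_above_def L_def using key[OF _ G0] by auto
  have cge: "a - p (u - x) \<le> c" if "(u,a) \<in> G" for u a
    unfolding c_def by (rule cSup_upper[OF _ bdd]) (use that in \<open>auto simp: L_def\<close>)
  have cle: "c \<le> p (v + x) - b" if "(v,b) \<in> G" for v b
    unfolding c_def by (rule cSup_least[OF Lne]) (use key that in \<open>auto simp: L_def\<close>)
  define G' where "G' = {(u + t *\<^sub>R x, a + t * c) | u a t. (u,a) \<in> G}"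
  have memG': "(u + t *\<^sub>R x, a + t * c) \<in> G'" if "(u,a) \<in> G" for u a t
    using that unfolding G'_def by blast
  have "LG V p x1 G'"
    unfolding LG_def
  proof (intro conjI allI impI)
    show "G' \<subseteq> V \<times> UNIV"
    proof
      fix z assume "z \<in> G'"
      then obtain u a t where "(u,a) \<in> G" "z = (u + t *\<^sub>R x, a + t * c)" unfolding G'_def by blast
      then show "z \<in> V \<times> UNIV" using GV subspD(2,3)[OF sub] xV by simp
    qed
    show "(x1, 1) \<in> G'" using memG'[OF G1, of 0] by simp
  next
    fix y a z b assume "(y, a) \<in> G'" "(z, b) \<in> G'"
    then obtain u a' t v b' s where h: "(u,a') \<in> G" "y = u + t *\<^sub>R x" "a = a' + t * c"
      "(v,b') \<in> G" "z = v + s *\<^sub>R x" "b = b' + s * c" unfolding G'_def by blast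
    have e1: "y + z = (u + v) + (t + s) *\<^sub>R x" using h by (simp add: scaleR_add_left)
    have e2: "a + b = (a' + b') + (t + s) * c" using h by (simp add: distrib_right)
    show "(y + z, a + b) \<in> G'"
      unfolding e1 e2 by (rule memG'[OF Gadd[OF h(1) h(4)]])
  next
    fix y a k assume "(y, a) \<in> G'"
    then obtain u a' t where h: "(u,a') \<in> G" "y = u + t *\<^sub>R x" "a = a' + t * c"
      unfolding G'_def by blast
    have e1: "k *\<^sub>R y = k *\<^sub>R u + (k * t) *\<^sub>R x" using h by (simp add: scaleR_add_right)
    have e2: "k * a = k * a' + (k * t) * c" using h by (simp add: distrib_left)
    show "(k *\<^sub>R y, k * a) \<in> G'"
      unfolding e1 e2 by (rule memG'[OF Gsc[OF h(1)]])
  next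
    fix y a b assume "(y, a) \<in> G'" "(y, b) \<in> G'"
    then obtain u a' t v b' s where uG: "(u,a') \<in> G" and y1: "y = u + t *\<^sub>R x" and a: "a = a' + t * c"
      and vG: "(v,b') \<in> G" and y2: "y = v + s *\<^sub>R x" and b: "b = b' + s * c" unfolding G'_def by blast
    have ts: "t = s"
    proof (rule ccontr)
      assume "t \<noteq> s"
      have "(v - u, b' - a') \<in> G" using Gadd[OF vG Gsc[OF uG, of "-1"]] by simp
      then have "((1 / (t - s)) *\<^sub>R (v - u), (1 / (t - s)) * (b' - a')) \<in> G" by (rule Gsc)
      moreover have "v - u = (t - s) *\<^sub>R x" using y1 y2 by (simp add: algebra_simps)
      ultimately have "(x, (1 / (t - s)) * (b' - a')) \<in> G" using \<open>t \<noteq> s\<close> by simp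
      then have "x \<in> fst ` G" by (rule image_eqI[rotated]) simp
      then show False using xn by blast
    qed
    then have "u = v" using y1 y2 by simp
    then show "a = b" using Gfun uG vG a b ts by blast
  next
    fix y a assume "(y, a) \<in> G'"
    then obtain u a' t where uG: "(u,a') \<in> G" and y: "y = u + t *\<^sub>R x" and a: "a = a' + t * c"
      unfolding G'_def by blast
    have uV: "u \<in> V" using GV uG by blast
    consider "t = 0" | "t > 0" | "t < 0" by linarith
    then show "a \<le> p y"
    proof cases
      case 1 then show ?thesis using Gdom[OF uG] y a by simp
    next
      case 2
      have "(inverse t *\<^sub>R u, inverse t * a') \<in> G" by (rule Gsc[OF uG])
      from cle[OF this] have "c \<le> p (inverse t *\<^sub>R u + x) - inverse t * a'" .
      hence "t * c \<le> t * (p (inverse t *\<^sub>R u + x) - inverse t * a')" using 2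
        by (simp add: mult_left_mono)
      also have "\<dots> = t * p (inverse t *\<^sub>R u + x) - a'" using 2 by (simp add: right_diff_distrib)
      also have "t * p (inverse t *\<^sub>R u + x) = p (t *\<^sub>R (inverse t *\<^sub>R u + x))"
        using phom[of "inverse t *\<^sub>R u + x" t] 2 subspD(2,3)[OF sub] uV xV by simp
      also have "t *\<^sub>R (inverse t *\<^sub>R u + x) = u + t *\<^sub>R x" using 2 by (simp add: scaleR_add_right)
      also have "u + t *\<^sub>R x = y" using y by simp
      finally show ?thesis using a by simp
    next
      case 3
      define s where "s = - t"
      have s: "s > 0" using 3 s_def by simp
      have "(inverse s *\<^sub>R u, inverse s * a') \<in> G" by (rule Gsc[OF uG])
      from cge[OF this] have "inverse s * a' - p (inverse s *\<^sub>R u - x) \<le> c" .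
      hence "s * (inverse s * a' - p (inverse s *\<^sub>R u - x)) \<le> s * c" using s
        by (simp add: mult_left_mono)
      moreover have "s * (inverse s * a') = a'" using s by simp
      ultimately have "a' - s * p (inverse s *\<^sub>R u - x) \<le> s * c" by (simp add: right_diff_distrib)
      also have "s * p (inverse s *\<^sub>R u - x) = p (s *\<^sub>R (inverse s *\<^sub>R u - x))"
        using phom[of "inverse s *\<^sub>R u - x" s] s subspD(3,4)[OF sub] uV xV by simp
      also have "s *\<^sub>R (inverse s *\<^sub>R u - x) = u - s *\<^sub>R x" using s by (simp add: scaleR_diff_right)
      also have "u - s *\<^sub>R x = y" using y s_def by simp
      finally show ?thesis using a s_def by simp
    qed
  qed
  moreover have "G \<subseteq> G'"
  proof
    fix z assume "z \<in> G" then obtain u a where "z = (u,a)" "(u,a) \<in> G" by (cases z) auto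
    then show "z \<in> G'" using memG'[of u a 0] by simp
  qed
  moreover have "(x, c) \<in> G'" using memG'[OF G0, of 1] by simp
  hence "G' \<noteq> G"
  proof (intro notI)
    assume "(x, c) \<in> G'" "G' = G"
    then have "(x, c) \<in> G" by simp
    then have "x \<in> fst ` G" by (rule image_eqI[rotated]) simp
    then show False using xn by blast
  qed
  ultimately show ?thesis by blast
qed

lemma hahn_banach:
  assumes sub: "subsp V" and sl: "sublin V p" and x1: "x1 \<in> V" "x1 \<noteq> 0"
    and p1: "\<And>t. t \<le> p (t *\<^sub>R x1)"
  shows "\<exists>\<Psi>. lin V \<Psi> \<and> \<Psi> x1 = 1 \<and> (\<forall>x\<in>V. \<Psi> x \<le> p x)"
proof -
  define G0 where "G0 = {(t *\<^sub>R x1, t) | t. True}"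
  have LG0: "LG V p x1 G0"
    unfolding LG_def G0_def
  proof (intro conjI allI impI)
    show "{(t *\<^sub>R x1, t) |t. True} \<subseteq> V \<times> UNIV" using subspD[OF sub] x1 by auto
    show "(x1, 1) \<in> {(t *\<^sub>R x1, t) |t. True}" by (auto intro: exI[of _ 1])
  next
    fix x a y b assume "(x, a) \<in> {(t *\<^sub>R x1, t) |t. True}" "(y, b) \<in> {(t *\<^sub>R x1, t) |t. True}"
    then show "(x + y, a + b) \<in> {(t *\<^sub>R x1, t) |t. True}"
      by (auto simp: scaleR_add_left intro!: exI[of _ "a + b"])
  next
    fix x a c assume "(x, a) \<in> {(t *\<^sub>R x1, t) |t. True}"
    then show "(c *\<^sub>R x, c * a) \<in> {(t *\<^sub>R x1, t) |t. True}" by auto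
  next
    fix x a b assume "(x, a) \<in> {(t *\<^sub>R x1, t) |t. True}" "(x, b) \<in> {(t *\<^sub>R x1, t) |t. True}"
    then show "a = b" using x1(2) by (auto simp: scaleR_cancel_right)
  next
    fix x a assume "(x, a) \<in> {(t *\<^sub>R x1, t) |t. True}"
    then show "a \<le> p x" using p1 by auto
  qed
  define Sg where "Sg = {G. LG V p x1 G}"
  have "\<forall>Ch\<in>chains Sg. \<exists>U\<in>Sg. \<forall>X\<in>Ch. X \<subseteq> U"
  proof
    fix Ch assume Ch: "Ch \<in> chains Sg"
    show "\<exists>U\<in>Sg. \<forall>X\<in>Ch. X \<subseteq> U"
    proof (cases "Ch = {}")
      case True then show ?thesis using LG0 Sg_def by blast
    next
      case False
      have ChS: "\<And>X. X \<in> Ch \<Longrightarrow> LG V p x1 X" using chainsD2[OF Ch] Sg_def by blast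
      have cmp: "\<And>X Y. X \<in> Ch \<Longrightarrow> Y \<in> Ch \<Longrightarrow> X \<subseteq> Y \<or> Y \<subseteq> X" using chainsD[OF Ch] by blast
      have "LG V p x1 (\<Union>Ch)"
        unfolding LG_def
      proof (intro conjI allI impI)
        show "\<Union> Ch \<subseteq> V \<times> UNIV"
        proof
          fix z assume "z \<in> \<Union> Ch"
          then obtain X u a where "X \<in> Ch" "z = (u,a)" "(u,a) \<in> X" by (cases z) blast
          then show "z \<in> V \<times> UNIV" using LGD(1)[OF ChS] by blast
        qed
        obtain X0 where "X0 \<in> Ch" using False by blast
        then show "(x1, 1) \<in> \<Union> Ch" using LGD(2)[OF ChS[OF \<open>X0 \<in> Ch\<close>]] by blast
      next
        fix x a y b assume "(x, a) \<in> \<Union> Ch" "(y, b) \<in> \<Union> Ch"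
        then obtain X Y where XY: "X \<in> Ch" "Y \<in> Ch" "(x,a) \<in> X" "(y,b) \<in> Y" by blast
        show "(x + y, a + b) \<in> \<Union> Ch"
        proof (cases "X \<subseteq> Y")
          case True then show ?thesis using LGD(3)[OF ChS[OF XY(2)], of x a y b] XY by blast
        next
          case False then have "Y \<subseteq> X" using cmp XY by blast
          then show ?thesis using LGD(3)[OF ChS[OF XY(1)], of x a y b] XY by blast
        qed
      next
        fix x a c assume "(x, a) \<in> \<Union> Ch"
        then obtain X where "X \<in> Ch" "(x,a) \<in> X" by blast
        then show "(c *\<^sub>R x, c * a) \<in> \<Union> Ch" using LGD(4)[OF ChS] by blast
      next
        fix x a b assume "(x, a) \<in> \<Union> Ch" "(x, b) \<in> \<Union> Ch"
        then obtain X Y where XY: "X \<in> Ch" "Y \<in> Ch" "(x,a) \<in> X" "(x,b) \<in> Y" by blast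
        show "a = b"
        proof (cases "X \<subseteq> Y")
          case True then show ?thesis using LGD(5)[OF ChS[OF XY(2)], of x a b] XY by blast
        next
          case False then have "Y \<subseteq> X" using cmp XY by blast
          then show ?thesis using LGD(5)[OF ChS[OF XY(1)], of x a b] XY by blast
        qed
      next
        fix x a assume "(x, a) \<in> \<Union> Ch"
        then obtain X where "X \<in> Ch" "(x,a) \<in> X" by blast
        then show "a \<le> p x" using LGD(6)[OF ChS] by blast
      qed
      then show ?thesis using Sg_def by blast
    qed
  qed
  from Zorn_Lemma2[OF this] obtain M where M: "M \<in> Sg" and maxM: "\<forall>X\<in>Sg. M \<subseteq> X \<longrightarrow> X = M"
    by blast
  have LM: "LG V p x1 M" using M Sg_def by blast
  have dom: "\<exists>a. (v, a) \<in> M" if "v \<in> V" for v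
  proof (rule ccontr)
    assume "\<nexists>a. (v, a) \<in> M"
    then have "v \<notin> fst ` M" by force
    from LG_extend[OF sub sl LM that this] obtain G' where "LG V p x1 G'" "M \<subseteq> G'" "G' \<noteq> M"
      by blast
    then show False using maxM Sg_def by blast
  qed
  have Mfun: "\<And>u a b. (u,a) \<in> M \<Longrightarrow> (u,b) \<in> M \<Longrightarrow> a = b" using LGD(5)[OF LM] by blast
  define \<Psi> where "\<Psi> v = (THE a. (v, a) \<in> M)" for v
  have PsiM: "(v, \<Psi> v) \<in> M" if vV: "v \<in> V" for v
  proof -
    obtain a where a: "(v, a) \<in> M" using dom[OF vV] by blast
    have "(THE a. (v, a) \<in> M) = a" by (rule the_equality) (use a Mfun in auto)
    then show ?thesis using a \<Psi>_def by simp
  qed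
  have PsiE: "\<Psi> v = a" if "(v, a) \<in> M" "v \<in> V" for v a
    using Mfun[OF that(1) PsiM[OF that(2)]] by simp
  show ?thesis
  proof (intro exI conjI ballI)
    show "lin V \<Psi>" unfolding lin_def
    proof (intro conjI ballI allI)
      fix x y assume xy: "x \<in> V" "y \<in> V"
      have "(x + y, \<Psi> x + \<Psi> y) \<in> M" using LGD(3)[OF LM PsiM[OF xy(1)] PsiM[OF xy(2)]] .
      then show "\<Psi> (x + y) = \<Psi> x + \<Psi> y"
        using PsiE subspD(2)[OF sub xy] by blast
    next
      fix x c assume x: "x \<in> V"
      have "(c *\<^sub>R x, c * \<Psi> x) \<in> M" using LGD(4)[OF LM PsiM[OF x]] .
      then show "\<Psi> (c *\<^sub>R x) = c * \<Psi> x"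
        using PsiE subspD(3)[OF sub x] by blast
    qed
    show "\<Psi> x1 = 1" using PsiE[of x1 1] LGD(2)[OF LM] x1 by blast
    fix x assume "x \<in> V"
    then show "\<Psi> x \<le> p x" using PsiM LGD(6)[OF LM] by blast
  qed
qed

definition cvx :: "'v::real_vector set \<Rightarrow> bool" where
  "cvx A \<longleftrightarrow> (\<forall>x\<in>A. \<forall>y\<in>A. \<forall>t::real. 0 \<le> t \<and> t \<le> 1 \<longrightarrow> t *\<^sub>R x + (1 - t) *\<^sub>R y \<in> A)"

lemma separation:
  assumes sub: "subsp V" and AV: "A \<subseteq> V" and Ane: "A \<noteq> {}" and cv: "cvx A"
    and rad: "\<forall>a\<in>A. \<forall>w\<in>V. \<exists>e>0. a + e *\<^sub>R w \<in> A" and A0: "0 \<notin> A"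
  shows "\<exists>\<Psi>. lin V \<Psi> \<and> (\<forall>a\<in>A. \<Psi> a < 0)"
proof -
  obtain a0 where a0: "a0 \<in> A" using Ane by blast
  have a0V: "a0 \<in> V" using a0 AV by blast
  define B where "B = (\<lambda>a. a - a0) ` A"
  define x1 where "x1 = - a0"
  have x1V: "x1 \<in> V" using subspD(5)[OF sub a0V] x1_def by simp
  have B0: "0 \<in> B" using a0 B_def by force
  have BV: "B \<subseteq> V" using AV subspD(4)[OF sub _ a0V] B_def by blast
  have memB: "b \<in> B \<longleftrightarrow> b + a0 \<in> A" for b
  proof
    assume "b \<in> B" then obtain a where "a \<in> A" "b = a - a0" using B_def by blast
    then show "b + a0 \<in> A" by simp
  next
    assume "b + a0 \<in> A" then have "(b + a0) - a0 \<in> B" using B_def by blast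
    then show "b \<in> B" by simp
  qed
  have x1B: "x1 \<notin> B" using memB[of x1] A0 x1_def by simp
  have x1n0: "x1 \<noteq> 0" using x1B B0 by blast
  have cvB: "t *\<^sub>R x + (1 - t) *\<^sub>R y \<in> B" if "x \<in> B" "y \<in> B" "0 \<le> t" "t \<le> 1" for x y t
  proof -
    have "t *\<^sub>R (x + a0) + (1 - t) *\<^sub>R (y + a0) \<in> A"
      using cv that memB unfolding cvx_def by blast
    also have "t *\<^sub>R (x + a0) + (1 - t) *\<^sub>R (y + a0) = (t *\<^sub>R x + (1 - t) *\<^sub>R y) + a0"
      by (simp add: algebra_simps)
    finally show ?thesis using memB by blast
  qed
  have radB: "\<exists>e>0. b + e *\<^sub>R w \<in> B" if bB: "b \<in> B" and wV: "w \<in> V" for b w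
  proof -
    have "b + a0 \<in> A" using bB memB by blast
    then obtain e where "e > 0" "(b + a0) + e *\<^sub>R w \<in> A" using rad wV by blast
    moreover have "(b + a0) + e *\<^sub>R w = (b + e *\<^sub>R w) + a0" by (simp add: algebra_simps)
    ultimately show ?thesis using memB by auto
  qed
  define Q where "Q v = {t::real. 0 < t \<and> inverse t *\<^sub>R v \<in> B}" for v
  define p where "p v = Inf (Q v)" for v
  have Qne: "Q v \<noteq> {}" if vV: "v \<in> V" for v
  proof -
    obtain e where e: "e > 0" "0 + e *\<^sub>R v \<in> B" using radB[OF B0 vV] by blast
    then have "inverse e \<in> Q v" using Q_def by simp
    then show ?thesis by blast
  qed
  have Qbdd: "bdd_below (Q v)" for v unfolding bdd_below_def Q_def by (rule exI[of _ 0]) auto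
  have Qup: "t' \<in> Q v" if "t \<in> Q v" "t \<le> t'" for t t' v
  proof -
    have t: "0 < t" "inverse t *\<^sub>R v \<in> B" using that Q_def by auto
    have t': "0 < t'" using t that by linarith
    have "(t / t') *\<^sub>R (inverse t *\<^sub>R v) + (1 - t / t') *\<^sub>R 0 \<in> B"
      by (rule cvB[OF t(2) B0]) (use t t' that in \<open>auto simp: field_simps\<close>)
    also have "(t / t') *\<^sub>R (inverse t *\<^sub>R v) + (1 - t / t') *\<^sub>R 0 = inverse t' *\<^sub>R v"
      using t by (simp add: field_simps)
    finally show ?thesis using t' Q_def by simp
  qed
  have p0: "0 \<le> p v" if "v \<in> V" for v
    unfolding p_def by (rule cInf_greatest[OF Qne[OF that]]) (auto simp: Q_def)
  have ple: "p v \<le> t" if "t \<in> Q v" for v t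
    unfolding p_def by (rule cInf_lower[OF that Qbdd])
  have plt: "t \<in> Q v" if vV: "v \<in> V" and pv: "p v < t" for v t
  proof -
    obtain t' where "t' \<in> Q v" "t' < t"
      using pv unfolding p_def using cInf_lessD[OF Qne[OF vV]] by blast
    then show ?thesis using Qup by force
  qed
  have padd: "p (x + y) \<le> p x + p y" if "x \<in> V" "y \<in> V" for x y
  proof (rule field_le_epsilon)
    fix e :: real assume e: "0 < e"
    define s where "s = p x + e / 2"
    define t where "t = p y + e / 2"
    have s: "s \<in> Q x" "t \<in> Q y" using plt that e s_def t_def by auto
    have sp: "0 < s" "0 < t" and sB: "inverse s *\<^sub>R x \<in> B" "inverse t *\<^sub>R y \<in> B"
      using s Q_def by auto
    have "(s / (s + t)) *\<^sub>R (inverse s *\<^sub>R x) + (1 - s / (s + t)) *\<^sub>R (inverse t *\<^sub>R y) \<in> B"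
      by (rule cvB[OF sB]) (use sp in \<open>auto simp: field_simps\<close>)
    also have "(s / (s + t)) *\<^sub>R (inverse s *\<^sub>R x) + (1 - s / (s + t)) *\<^sub>R (inverse t *\<^sub>R y)
       = inverse (s + t) *\<^sub>R (x + y)"
    proof -
      have e1: "1 - s / (s + t) = t / (s + t)" using sp by (simp add: field_simps)
      have k1: "s / (s + t) * inverse s = inverse (s + t)" using sp by (simp add: field_simps)
      have k2: "t / (s + t) * inverse t = inverse (s + t)" using sp by (simp add: field_simps)
      have F1: "(s / (s + t)) *\<^sub>R (inverse s *\<^sub>R x) = inverse (s + t) *\<^sub>R x"
        by (simp only: scaleR_scaleR k1)
      have F2: "(t / (s + t)) *\<^sub>R (inverse t *\<^sub>R y) = inverse (s + t) *\<^sub>R y"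
        by (simp only: scaleR_scaleR k2)
      show ?thesis unfolding e1 F1 F2 scaleR_add_right by (rule refl)
    qed
    finally have "s + t \<in> Q (x + y)" using sp Q_def by simp
    then have "p (x + y) \<le> s + t" by (rule ple)
    then show "p (x + y) \<le> p x + p y + e" using s_def t_def by simp
  qed
  have phom1: "p (t *\<^sub>R x) \<le> t * p x" if "x \<in> V" "t > 0" for x t
  proof (rule field_le_epsilon)
    fix e :: real assume e: "0 < e"
    define s where "s = p x + e / t"
    have "s \<in> Q x" using plt that e s_def by auto
    then have sp: "0 < s" "inverse s *\<^sub>R x \<in> B" using Q_def by auto
    have "inverse (t * s) *\<^sub>R (t *\<^sub>R x) = inverse s *\<^sub>R x" using that(2) by simp
    moreover have "0 < t * s" using sp that(2) by simp
    ultimately have "t * s \<in> Q (t *\<^sub>R x)" using sp unfolding Q_def by (simp only: mem_Collect_eq)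
    then have "p (t *\<^sub>R x) \<le> t * s" by (rule ple)
    also have "t * s = t * p x + e" using that(2) s_def by (simp add: field_simps)
    finally show "p (t *\<^sub>R x) \<le> t * p x + e" .
  qed
  have phom: "p (t *\<^sub>R x) = t * p x" if "x \<in> V" "t > 0" for x t
  proof (rule antisym)
    show "p (t *\<^sub>R x) \<le> t * p x" by (rule phom1[OF that])
    have tx: "t *\<^sub>R x \<in> V" using subspD(3)[OF sub that(1)] .
    have "p x = p (inverse t *\<^sub>R (t *\<^sub>R x))" using that(2) by simp
    also have "\<dots> \<le> inverse t * p (t *\<^sub>R x)" using phom1[OF tx, of "inverse t"] that(2) by simp
    finally have h: "p x \<le> inverse t * p (t *\<^sub>R x)" .
    have "t * p x \<le> t * (inverse t * p (t *\<^sub>R x))" by (rule mult_left_mono[OF h]) (use that(2) in simp)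
    also have "\<dots> = p (t *\<^sub>R x)" using that(2) by simp
    finally show "t * p x \<le> p (t *\<^sub>R x)" .
  qed
  have sl: "sublin V p" unfolding sublin_def using padd phom by blast
  have pB: "p b < 1" if bB: "b \<in> B" for b
  proof -
    obtain e where e: "e > 0" "b + e *\<^sub>R b \<in> B" using radB[OF bB] BV bB by blast
    have "b + e *\<^sub>R b = inverse (inverse (1 + e)) *\<^sub>R b" by (simp add: algebra_simps)
    then have "inverse (1 + e) \<in> Q b" using e Q_def by simp
    then have "p b \<le> inverse (1 + e)" by (rule ple)
    also have "inverse (1 + e) < 1" using e by (simp add: inverse_less_1_iff)
    finally show ?thesis .
  qed
  have px1: "1 \<le> p x1"
  proof (rule ccontr)
    assume "\<not> 1 \<le> p x1"
    then have "1 \<in> Q x1" using plt[OF x1V] by simp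
    then show False using x1B Q_def by simp
  qed
  have p1: "t \<le> p (t *\<^sub>R x1)" for t
  proof (cases "t > 0")
    case True then show ?thesis using phom[OF x1V True] px1 by simp
  next
    case False then show ?thesis using p0 subspD(3)[OF sub x1V, of t] by force
  qed
  obtain \<Psi> where lin: "lin V \<Psi>" and Px1: "\<Psi> x1 = 1" and Pp: "\<forall>x\<in>V. \<Psi> x \<le> p x"
    using hahn_banach[OF sub sl x1V x1n0 p1] by blast
  show ?thesis
  proof (intro exI conjI ballI)
    show "lin V \<Psi>" by (rule lin)
    fix a assume a: "a \<in> A"
    have aV: "a \<in> V" using a AV by blast
    have "a + x1 \<in> B" using memB[of "a + x1"] a x1_def by simp
    then have "\<Psi> (a + x1) < 1" using pB Pp BV by force
    moreover have "\<Psi> (a + x1) = \<Psi> a + \<Psi> x1" using linD(1)[OF lin sub aV x1V] .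
    ultimately show "\<Psi> a < 0" using Px1 by simp
  qed
qed

definition lcs :: "'v::real_vector set \<Rightarrow> 'v topology \<Rightarrow> bool" where
  "lcs V T \<longleftrightarrow> topspace T = V \<and> subsp V \<and>
     continuous_map (prod_topology T T) T (\<lambda>(x, y). x + y) \<and>
     continuous_map (prod_topology euclideanreal T) T (\<lambda>(a, x). a *\<^sub>R x) \<and>
     (\<forall>x\<in>V. \<forall>U. openin T U \<and> x \<in> U \<longrightarrow> (\<exists>W. openin T W \<and> x \<in> W \<and> W \<subseteq> U \<and> cvx W))"

lemma lcs_add:
  assumes "lcs V T" "continuous_map X T f" "continuous_map X T g"
  shows "continuous_map X T (\<lambda>x. f x + g x)"
proof -
  have "continuous_map X (prod_topology T T) (\<lambda>x. (f x, g x))"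
    by (rule continuous_map_pairedI[OF assms(2,3)])
  moreover have "continuous_map (prod_topology T T) T (\<lambda>(x, y). x + y)"
    using assms(1) by (simp add: lcs_def)
  ultimately have "continuous_map X T ((\<lambda>(x, y). x + y) \<circ> (\<lambda>x. (f x, g x)))"
    by (rule continuous_map_compose)
  then show ?thesis by (simp add: o_def)
qed

lemma lcs_smul:
  assumes "lcs V T" "continuous_map X euclideanreal f" "continuous_map X T g"
  shows "continuous_map X T (\<lambda>x. f x *\<^sub>R g x)"
proof -
  have "continuous_map X (prod_topology euclideanreal T) (\<lambda>x. (f x, g x))"
    by (rule continuous_map_pairedI[OF assms(2,3)])
  moreover have "continuous_map (prod_topology euclideanreal T) T (\<lambda>(a, x). a *\<^sub>R x)"
    using assms(1) by (simp add: lcs_def)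
  ultimately have "continuous_map X T ((\<lambda>(a, x). a *\<^sub>R x) \<circ> (\<lambda>x. (f x, g x)))"
    by (rule continuous_map_compose)
  then show ?thesis by (simp add: o_def)
qed

lemma lcs_const:
  assumes "lcs V T" "c \<in> V"
  shows "continuous_map X T (\<lambda>x. c)"
  using assms by (simp add: lcs_def)

lemma lcs_aff:
  assumes "lcs V T" "b \<in> V"
  shows "continuous_map T T (\<lambda>n. b + l *\<^sub>R n)"
proof -
  have "continuous_map T T (\<lambda>n. n)" using continuous_map_id by (simp add: id_def)
  then have "continuous_map T T (\<lambda>n. l *\<^sub>R n)"
    by (rule lcs_smul[OF assms(1) continuous_map_canonical_const])
  then show ?thesis by (rule lcs_add[OF assms(1) lcs_const[OF assms]])
qed

lemma lcs_radial:
  assumes lcs: "lcs V T" and U: "openin T U" "u \<in> U" and w: "w \<in> V"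
  shows "\<exists>e>0. \<forall>\<epsilon>. \<bar>\<epsilon>\<bar> < e \<longrightarrow> u + \<epsilon> *\<^sub>R w \<in> U"
proof -
  have uV: "u \<in> V" using U openin_subset lcs by (fastforce simp: lcs_def)
  have "continuous_map euclideanreal T (\<lambda>\<epsilon>. \<epsilon> *\<^sub>R w)"
    by (rule lcs_smul[OF lcs _ lcs_const[OF lcs w]]) (simp add: id_def[symmetric])
  then have g: "continuous_map euclideanreal T (\<lambda>\<epsilon>. u + \<epsilon> *\<^sub>R w)"
    by (rule lcs_add[OF lcs lcs_const[OF lcs uV]])
  have "openin euclideanreal {x \<in> topspace euclideanreal. u + x *\<^sub>R w \<in> U}"
    by (rule openin_continuous_map_preimage[OF g U(1)])
  then have op: "open {x. u + x *\<^sub>R w \<in> U}" by simp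
  have "0 \<in> {x. u + x *\<^sub>R w \<in> U}" using U by simp
  then obtain e where "e > 0" "\<forall>y. dist y 0 < e \<longrightarrow> y \<in> {x. u + x *\<^sub>R w \<in> U}"
    using op unfolding open_dist by blast
  then show ?thesis by (auto simp: dist_real_def)
qed

lemma lin_cont:
  assumes lcs: "lcs V T" and lin: "lin V \<psi>" and U: "openin T U" "x0 \<in> U"
    and bnd: "\<forall>u\<in>U. m \<le> \<psi> u"
  shows "continuous_map T euclideanreal \<psi>"
proof -
  have sub: "subsp V" and top: "topspace T = V" using lcs by (auto simp: lcs_def)
  have UV: "U \<subseteq> V" using openin_subset[OF U(1)] top by simp
  have x0V: "x0 \<in> V" using U UV by blast
  define aff where "aff l z n = (x0 - l *\<^sub>R z) + l *\<^sub>R n" for l z n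
  have affV: "aff l z n \<in> V" if "z \<in> V" "n \<in> V" for l z n
    unfolding aff_def using subspD[OF sub] that x0V by simp
  have affc: "continuous_map T T (aff l z)" if "z \<in> V" for l z
    unfolding aff_def[abs_def]
    by (rule lcs_aff[OF lcs]) (use subspD[OF sub] that x0V in simp)
  have psiaff: "\<psi> (aff l z n) = \<psi> x0 - l * \<psi> z + l * \<psi> n" if "z \<in> V" "n \<in> V" for l z n
    unfolding aff_def using linD[OF lin sub] subspD[OF sub] that x0V by simp
  define W where "W = {n \<in> topspace T. n \<in> U} \<inter> {n \<in> topspace T. aff (-1) x0 n \<in> U}"
  have Wo: "openin T W" unfolding W_def
    by (intro openin_Int openin_continuous_map_preimage[OF continuous_map_id[unfolded id_def] U(1)]
        openin_continuous_map_preimage[OF affc[OF x0V] U(1)])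
  have x0W: "x0 \<in> W" unfolding W_def using U x0V top by (simp add: aff_def)
  define K where "K = \<psi> x0 - m + 1"
  have WK: "\<bar>\<psi> w - \<psi> x0\<bar> < K" if "w \<in> W" for w
  proof -
    have w: "w \<in> V" "w \<in> U" "aff (-1) x0 w \<in> U" using that top unfolding W_def by auto
    have "m \<le> \<psi> w" using bnd w by blast
    moreover have "m \<le> \<psi> (aff (-1) x0 w)" using bnd w by blast
    then have "m \<le> 2 * \<psi> x0 - \<psi> w" using psiaff[OF x0V w(1), of "-1"] by simp
    ultimately show ?thesis unfolding K_def by linarith
  qed
  have Kpos: "K > 0" using WK[OF x0W] by simp
  show ?thesis
    unfolding continuous_map_def
  proof (intro conjI allI impI)
    show "\<psi> \<in> topspace T \<rightarrow> topspace euclideanreal" by simp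
    fix S :: "real set" assume "openin euclideanreal S"
    then have So: "open S" by simp
    show "openin T {x \<in> topspace T. \<psi> x \<in> S}"
    proof (subst openin_subopen, intro ballI)
      fix z assume z: "z \<in> {x \<in> topspace T. \<psi> x \<in> S}"
      then have zV: "z \<in> V" and zS: "\<psi> z \<in> S" using top by auto
      obtain e where e: "e > 0" "\<forall>y. dist y (\<psi> z) < e \<longrightarrow> y \<in> S"
        using So zS unfolding open_dist by blast
      define l where "l = K / e"
      have l: "l > 0" using Kpos e by (simp add: l_def)
      define N where "N = {n \<in> topspace T. aff l z n \<in> W}"
      have No: "openin T N" unfolding N_def
        by (rule openin_continuous_map_preimage[OF affc[OF zV] Wo])
      have zN: "z \<in> N" unfolding N_def using zV top x0W by (simp add: aff_def)
      have NS: "N \<subseteq> {x \<in> topspace T. \<psi> x \<in> S}"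
      proof
        fix n assume n: "n \<in> N"
        then have nV: "n \<in> V" and nW: "aff l z n \<in> W" using top unfolding N_def by auto
        have "\<bar>\<psi> (aff l z n) - \<psi> x0\<bar> < K" by (rule WK[OF nW])
        then have "\<bar>l * (\<psi> n - \<psi> z)\<bar> < K" using psiaff[OF zV nV, of l] by (simp add: algebra_simps)
        moreover have "\<bar>l * (\<psi> n - \<psi> z)\<bar> = l * \<bar>\<psi> n - \<psi> z\<bar>" using l by (simp add: abs_mult)
        moreover have "K = l * e" using e by (simp add: l_def)
        ultimately have "l * \<bar>\<psi> n - \<psi> z\<bar> < l * e" by simp
        then have "\<bar>\<psi> n - \<psi> z\<bar> < e" using l by simp
        then have "\<psi> n \<in> S" using e by (simp add: dist_real_def)
        then show "n \<in> {x \<in> topspace T. \<psi> x \<in> S}" using nV top by simp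
      qed
      show "\<exists>N. openin T N \<and> z \<in> N \<and> N \<subseteq> {x \<in> topspace T. \<psi> x \<in> S}"
        using No zN NS by blast
    qed
  qed
qed

definition ecvx :: "'v::real_vector set \<Rightarrow> ('v \<Rightarrow> ereal) \<Rightarrow> bool" where
  "ecvx V f \<longleftrightarrow> (\<forall>x\<in>V. \<forall>y\<in>V. \<forall>t::real. 0 < t \<and> t < 1 \<longrightarrow>
      f (t *\<^sub>R x + (1 - t) *\<^sub>R y) \<le> ereal t * f x + ereal (1 - t) * f y)"

lemma ecvx_bound:
  assumes "ecvx V f" "x \<in> V" "y \<in> V" "0 \<le> t" "t \<le> 1" "f x \<le> ereal a" "f y \<le> ereal b"
  shows "f (t *\<^sub>R x + (1 - t) *\<^sub>R y) \<le> ereal (t * a + (1 - t) * b)"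
proof -
  consider "t = 0" | "t = 1" | "0 < t \<and> t < 1" using assms(4,5) by linarith
  then show ?thesis
  proof cases
    case 1 then show ?thesis using assms by simp
  next
    case 2 then show ?thesis using assms by simp
  next
    case 3
    have "f (t *\<^sub>R x + (1 - t) *\<^sub>R y) \<le> ereal t * f x + ereal (1 - t) * f y"
      using assms(1-3) 3 unfolding ecvx_def by blast
    also have "\<dots> \<le> ereal t * ereal a + ereal (1 - t) * ereal b"
      by (intro add_mono ereal_mult_left_mono) (use assms 3 in auto)
    also have "\<dots> = ereal (t * a + (1 - t) * b)" by simp
    finally show ?thesis .
  qed
qed

lemma lin_pair:
  assumes sub: "subsp V" and lin: "lin (V \<times> (UNIV::real set)) \<Psi>"
  shows "lin V (\<lambda>y. \<Psi> (y, 0))" "\<And>y t. y \<in> V \<Longrightarrow> \<Psi> (y, t) = \<Psi> (y, 0) + \<Psi> (0, 1) * t"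
proof -
  have a: "\<Psi> (x + y) = \<Psi> x + \<Psi> y" if "x \<in> V \<times> UNIV" "y \<in> V \<times> UNIV" for x y
    using lin that unfolding lin_def by blast
  have b: "\<Psi> (c *\<^sub>R x) = c * \<Psi> x" if "x \<in> V \<times> UNIV" for c x
    using lin that unfolding lin_def by blast
  show "lin V (\<lambda>y. \<Psi> (y, 0))" unfolding lin_def
  proof (intro conjI ballI allI)
    fix x y assume "x \<in> V" "y \<in> V"
    then show "\<Psi> (x + y, 0) = \<Psi> (x, 0) + \<Psi> (y, 0)" using a[of "(x,0)" "(y,0)"] by simp
  next
    fix x c assume "x \<in> V"
    then show "\<Psi> (c *\<^sub>R x, 0) = c * \<Psi> (x, 0)" using b[of "(x,0)" c] by simp
  qed
  fix y t assume y: "y \<in> V"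
  have "\<Psi> (y, t) = \<Psi> ((y, 0) + t *\<^sub>R (0, 1))" by simp
  also have "\<dots> = \<Psi> (y, 0) + \<Psi> (t *\<^sub>R (0, 1))" using a[of "(y,0)" "t *\<^sub>R (0,1)"] y subspD(1)[OF sub] by simp
  also have "\<Psi> (t *\<^sub>R (0, 1)) = t * \<Psi> (0, 1)" using b[of "(0,1)" t] subspD(1)[OF sub] by simp
  finally show "\<Psi> (y, t) = \<Psi> (y, 0) + \<Psi> (0, 1) * t" by simp
qed

lemma FM_sep:
  fixes f :: "'v::real_vector \<Rightarrow> ereal"
  assumes lcs: "lcs V T" and fcv: "ecvx V f"
    and lsc: "\<forall>c. closedin T {x \<in> V. f x \<le> ereal c}"
    and y0: "y0 \<in> V" "f y0 = ereal t0"
    and x0: "x0 \<in> V" "ereal s < f x0" and tau0: "\<tau>0 < s"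
  shows "\<exists>\<psi> c. lin V \<psi> \<and> continuous_map T euclideanreal \<psi> \<and> c \<le> 0 \<and>
     (\<forall>y\<in>V. \<forall>t. f y \<le> ereal t \<longrightarrow> \<psi> y + c * t < \<psi> x0 + c * \<tau>0) \<and>
     (c = 0 \<longrightarrow> (\<exists>\<delta>>0. \<forall>y\<in>V. \<forall>t. f y \<le> ereal t \<longrightarrow> \<psi> y \<le> \<psi> x0 - \<delta>))"
proof -
  have sub: "subsp V" and top: "topspace T = V" using lcs by (auto simp: lcs_def)
  have "openin T (topspace T - {x \<in> V. f x \<le> ereal s})" using lsc closedin_def by blast
  then have O: "openin T (V - {x \<in> V. f x \<le> ereal s})" using top by simp
  have "x0 \<in> V - {x \<in> V. f x \<le> ereal s}" using x0 by simp
  then obtain W where W: "openin T W" "x0 \<in> W" "W \<subseteq> V - {x \<in> V. f x \<le> ereal s}" "cvx W"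
    using lcs O x0(1) unfolding lcs_def by blast
  have WV: "W \<subseteq> V" using W by blast
  have Wf: "ereal s < f u" if "u \<in> W" for u using W that by auto
  define A :: "('v \<times> real) set" where
    "A = {(y - u, t - \<tau>) | y t u \<tau>. y \<in> V \<and> f y \<le> ereal t \<and> u \<in> W \<and> \<tau> < s}"
  have memA: "(y - u, t - \<tau>) \<in> A" if "y \<in> V" "f y \<le> ereal t" "u \<in> W" "\<tau> < s" for y t u \<tau>
    unfolding A_def using that by blast
  have subP: "subsp (V \<times> (UNIV::real set))"
    unfolding subsp_def using subspD[OF sub] by (auto simp: zero_prod_def)
  have AV: "A \<subseteq> V \<times> UNIV"
  proof
    fix z assume "z \<in> A"
    then obtain y t u \<tau> where "z = (y - u, t - \<tau>)" "y \<in> V" "u \<in> W" unfolding A_def by blast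
    then show "z \<in> V \<times> UNIV" using subspD(4)[OF sub] WV by blast
  qed
  have Ane: "A \<noteq> {}" using memA[OF y0(1) _ W(2) tau0] y0(2) by auto
  have cvA: "cvx A" unfolding cvx_def
  proof (intro ballI allI impI)
    fix a b and l :: real assume a: "a \<in> A" and b: "b \<in> A" and l: "0 \<le> l \<and> l \<le> 1"
    obtain y1 t1 u1 \<tau>1 where 1: "a = (y1 - u1, t1 - \<tau>1)" "y1 \<in> V" "f y1 \<le> ereal t1" "u1 \<in> W" "\<tau>1 < s"
      using a unfolding A_def by blast
    obtain y2 t2 u2 \<tau>2 where 2: "b = (y2 - u2, t2 - \<tau>2)" "y2 \<in> V" "f y2 \<le> ereal t2" "u2 \<in> W" "\<tau>2 < s"
      using b unfolding A_def by blast
    define Y where "Y = l *\<^sub>R y1 + (1 - l) *\<^sub>R y2"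
    define U where "U = l *\<^sub>R u1 + (1 - l) *\<^sub>R u2"
    have YV: "Y \<in> V" unfolding Y_def using subspD[OF sub] 1 2 by simp
    have fY: "f Y \<le> ereal (l * t1 + (1 - l) * t2)"
      unfolding Y_def by (rule ecvx_bound[OF fcv]) (use 1 2 l in auto)
    have UW: "U \<in> W" unfolding U_def using W(4) 1 2 l unfolding cvx_def by blast
    have ts: "l * \<tau>1 + (1 - l) * \<tau>2 < s"
    proof (cases "l = 0")
      case True then show ?thesis using 2 by simp
    next
      case False
      then have "l * \<tau>1 < l * s" using l 1 by (simp add: mult_strict_left_mono)
      moreover have "(1 - l) * \<tau>2 \<le> (1 - l) * s" using l 2 by (simp add: mult_left_mono)
      ultimately show ?thesis by (simp add: algebra_simps)
    qed
    have "l *\<^sub>R a + (1 - l) *\<^sub>R b = (Y - U, (l * t1 + (1 - l) * t2) - (l * \<tau>1 + (1 - l) * \<tau>2))"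
      unfolding 1 2 Y_def U_def by (simp add: algebra_simps)
    then show "l *\<^sub>R a + (1 - l) *\<^sub>R b \<in> A" using memA[OF YV fY UW ts] by simp
  qed
  have radA: "\<forall>a\<in>A. \<forall>w\<in>V \<times> UNIV. \<exists>e>0. a + e *\<^sub>R w \<in> A"
  proof (intro ballI)
    fix a w assume a: "a \<in> A" and w: "w \<in> V \<times> (UNIV::real set)"
    obtain y t u \<tau> where 1: "a = (y - u, t - \<tau>)" "y \<in> V" "f y \<le> ereal t" "u \<in> W" "\<tau> < s"
      using a unfolding A_def by blast
    obtain v \<rho> where w': "w = (v, \<rho>)" "v \<in> V" using w by blast
    obtain e1 where e1: "e1 > 0" "\<forall>\<epsilon>. \<bar>\<epsilon>\<bar> < e1 \<longrightarrow> u + \<epsilon> *\<^sub>R (- v) \<in> W"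
      using lcs_radial[OF lcs W(1) 1(4) subspD(5)[OF sub w'(2)]] by blast
    define \<epsilon> where "\<epsilon> = min (e1 / 2) ((s - \<tau>) / (2 * (\<bar>\<rho>\<bar> + 1)))"
    have ep: "\<epsilon> > 0" using e1 1 by (simp add: \<epsilon>_def)
    have "\<bar>\<epsilon>\<bar> < e1" using ep e1 by (simp add: \<epsilon>_def)
    then have uW: "u + \<epsilon> *\<^sub>R (- v) \<in> W" using e1 by blast
    have "\<epsilon> \<le> (s - \<tau>) / (2 * (\<bar>\<rho>\<bar> + 1))" by (simp add: \<epsilon>_def)
    then have "\<epsilon> * (2 * (\<bar>\<rho>\<bar> + 1)) \<le> s - \<tau>" by (simp add: le_divide_eq)
    moreover have "- (\<epsilon> * \<rho>) \<le> \<epsilon> * (\<bar>\<rho>\<bar> + 1)"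
    proof -
      have "\<epsilon> * (- \<rho>) \<le> \<epsilon> * (\<bar>\<rho>\<bar> + 1)" by (rule mult_left_mono) (use ep in auto)
      then show ?thesis by simp
    qed
    moreover have "0 < \<epsilon> * (\<bar>\<rho>\<bar> + 1)" using ep by simp
    ultimately have ts: "\<tau> - \<epsilon> * \<rho> < s" by linarith
    have "a + \<epsilon> *\<^sub>R w = (y - (u + \<epsilon> *\<^sub>R (- v)), t - (\<tau> - \<epsilon> * \<rho>))"
      unfolding 1 w' by (simp add: algebra_simps)
    then show "\<exists>e>0. a + e *\<^sub>R w \<in> A" using memA[OF 1(2,3) uW ts] ep by auto
  qed
  have A0: "0 \<notin> A"
  proof
    assume "0 \<in> A"
    then obtain y t u \<tau> where 1: "(0::'v \<times> real) = (y - u, t - \<tau>)" "y \<in> V" "f y \<le> ereal t" "u \<in> W" "\<tau> < s"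
      unfolding A_def by blast
    then have "y = u" "t = \<tau>" by (auto simp: zero_prod_def)
    then have "f u \<le> ereal \<tau>" using 1 by simp
    also have "ereal \<tau> \<le> ereal s" using 1 by simp
    finally have "f u \<le> ereal s" .
    then show False using Wf[OF 1(4)] by simp
  qed
  obtain \<Psi> where lin: "lin (V \<times> UNIV) \<Psi>" and neg: "\<forall>a\<in>A. \<Psi> a < 0"
    using separation[OF subP AV Ane cvA radA A0] by blast
  define \<psi> where "\<psi> y = \<Psi> (y, 0)" for y
  define c where "c = \<Psi> (0, 1)"
  have lin\<psi>: "lin V \<psi>" unfolding \<psi>_def[abs_def] by (rule lin_pair(1)[OF sub lin])
  have Psi: "\<Psi> (y, t) = \<psi> y + c * t" if "y \<in> V" for y t
    unfolding \<psi>_def c_def by (rule lin_pair(2)[OF sub lin that])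
  have main: "\<psi> y + c * t < \<psi> u + c * \<tau>" if "y \<in> V" "f y \<le> ereal t" "u \<in> W" "\<tau> < s" for y t u \<tau>
  proof -
    have uV: "u \<in> V" using that WV by blast
    have "\<Psi> (y - u, t - \<tau>) < 0" using neg memA[OF that] by blast
    moreover have "\<Psi> (y - u, t - \<tau>) = \<psi> y - \<psi> u + c * t - c * \<tau>"
    proof -
      have e1: "\<Psi> (y - u, t - \<tau>) = \<psi> (y - u) + c * (t - \<tau>)" by (rule Psi[OF subspD(4)[OF sub that(1) uV]])
      have e2: "\<psi> (y - u) = \<psi> y - \<psi> u" by (rule linD(3)[OF lin\<psi> sub that(1) uV])
      show ?thesis unfolding e1 e2 by (simp add: right_diff_distrib)
    qed
    ultimately show ?thesis by simp
  qed
  have y0f: "f y0 \<le> ereal t0" using y0 by simp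
  have cle: "c \<le> 0"
  proof (rule ccontr)
    assume "\<not> c \<le> 0"
    then have cp: "c > 0" by simp
    define D where "D = \<psi> x0 + c * \<tau>0 - \<psi> y0 - c * t0"
    define t where "t = t0 + \<bar>D\<bar> / c"
    have "t0 \<le> t" using cp by (simp add: t_def)
    then have "f y0 \<le> ereal t" using y0f order_trans by fastforce
    from main[OF y0(1) this W(2) tau0] have "\<psi> y0 + c * t < \<psi> x0 + c * \<tau>0" .
    moreover have "c * t = c * t0 + \<bar>D\<bar>" using cp by (simp add: t_def algebra_simps)
    ultimately show False unfolding D_def by linarith
  qed
  have cont: "continuous_map T euclideanreal \<psi>"
  proof (rule lin_cont[OF lcs lin\<psi> W(1,2)])
    show "\<forall>u\<in>W. \<psi> y0 + c * t0 - c * \<tau>0 \<le> \<psi> u"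
      using main[OF y0(1) y0f _ tau0] by (fastforce simp: algebra_simps)
  qed
  have mx: "\<forall>y\<in>V. \<forall>t. f y \<le> ereal t \<longrightarrow> \<psi> y + c * t < \<psi> x0 + c * \<tau>0"
    using main W(2) tau0 by blast
  have zero: "\<exists>\<delta>>0. \<forall>y\<in>V. \<forall>t. f y \<le> ereal t \<longrightarrow> \<psi> y \<le> \<psi> x0 - \<delta>" if c0: "c = 0"
  proof -
    have d: "\<psi> y0 < \<psi> x0" using mx y0(1) y0f c0 by fastforce
    define w where "w = x0 - y0"
    have wV: "w \<in> V" using subspD(4)[OF sub x0(1) y0(1)] w_def by simp
    have \<psi>w: "\<psi> w = \<psi> x0 - \<psi> y0" using linD(3)[OF lin\<psi> sub x0(1) y0(1)] w_def by simp
    obtain e1 where e1: "e1 > 0" "\<forall>\<epsilon>. \<bar>\<epsilon>\<bar> < e1 \<longrightarrow> x0 + \<epsilon> *\<^sub>R (- w) \<in> W"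
      using lcs_radial[OF lcs W(1,2) subspD(5)[OF sub wV]] by blast
    have uW: "x0 + (e1 / 2) *\<^sub>R (- w) \<in> W" using e1 by simp
    have "\<psi> (x0 + (e1 / 2) *\<^sub>R (- w)) = \<psi> x0 - (e1 / 2) * \<psi> w"
      using linD[OF lin\<psi> sub] x0(1) wV subspD[OF sub] by simp
    then have bound: "\<psi> y < \<psi> x0 - (e1 / 2) * \<psi> w" if "y \<in> V" "f y \<le> ereal t" for y t
      using main[OF that uW tau0] c0 by simp
    show ?thesis
      by (rule exI[of _ "(e1 / 2) * \<psi> w"]) (use bound e1 d \<psi>w in \<open>auto intro: less_imp_le\<close>)
  qed
  show ?thesis using lin\<psi> cont cle mx zero by blast
qed

lemma FM_conv:
  fixes f :: "'v::real_vector \<Rightarrow> ereal"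
  assumes sub: "subsp V" and lin: "lin V \<psi>" and cont: "continuous_map T euclideanreal \<psi>"
    and c: "c < 0" and nm: "\<forall>x\<in>V. f x \<noteq> -\<infinity>"
    and ineq: "\<forall>y\<in>V. \<forall>t. f y \<le> ereal t \<longrightarrow> \<psi> y + c * t < \<psi> x0 + c * \<tau>0"
  shows "\<exists>\<phi> a. lin V \<phi> \<and> continuous_map T euclideanreal \<phi> \<and> (\<forall>y\<in>V. ereal (\<phi> y + a) \<le> f y)
      \<and> \<phi> x0 + a = \<tau>0"
proof -
  define k where "k = - 1 / c"
  have k: "k > 0" using c by (simp add: k_def)
  define \<phi> where "\<phi> y = k * \<psi> y" for y
  define a where "a = \<tau>0 - \<phi> x0"
  have lin\<phi>: "lin V \<phi>" using lin unfolding lin_def \<phi>_def by (simp add: algebra_simps)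
  have cont\<phi>: "continuous_map T euclideanreal \<phi>"
    unfolding \<phi>_def by (rule continuous_map_real_mult_left[OF cont])
  have minor: "ereal (\<phi> y + a) \<le> f y" if y: "y \<in> V" for y
  proof (cases "f y")
    case (real t)
    have "\<psi> y + c * t < \<psi> x0 + c * \<tau>0" using ineq y real by simp
    then have "\<psi> y - \<psi> x0 < (- c) * (t - \<tau>0)" by (simp add: algebra_simps)
    then have "k * (\<psi> y - \<psi> x0) < k * ((- c) * (t - \<tau>0))" using k by (rule mult_strict_left_mono)
    also have "k * ((- c) * (t - \<tau>0)) = t - \<tau>0" using c by (simp add: k_def)
    finally have "\<phi> y + a < t" unfolding \<phi>_def a_def by (simp add: algebra_simps)
    then show ?thesis using real by simp
  next
    case PInf then show ?thesis by simp
  next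
    case MInf then show ?thesis using nm y by simp
  qed
  show ?thesis using lin\<phi> cont\<phi> minor a_def by (intro exI[of _ \<phi>] exI[of _ a]) auto
qed

lemma FM_affine:
  fixes f :: "'v::real_vector \<Rightarrow> ereal"
  assumes lcs: "lcs V T" and fcv: "ecvx V f"
    and lsc: "\<forall>c. closedin T {x \<in> V. f x \<le> ereal c}"
    and nm: "\<forall>x\<in>V. f x \<noteq> -\<infinity>" and fin: "\<exists>x\<in>V. f x \<noteq> \<infinity>"
    and x0: "x0 \<in> V" "ereal r < f x0"
  shows "\<exists>\<phi> a. lin V \<phi> \<and> continuous_map T euclideanreal \<phi> \<and> (\<forall>y\<in>V. ereal (\<phi> y + a) \<le> f y)
      \<and> r < \<phi> x0 + a"
proof -
  have sub: "subsp V" using lcs by (simp add: lcs_def)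
  obtain y0 where y0V: "y0 \<in> V" and y0f: "f y0 \<noteq> \<infinity>" using fin by blast
  then obtain t0 where y0t: "f y0 = ereal t0" using nm by (cases "f y0") auto
  obtain \<psi>0 c0 where s0: "lin V \<psi>0" "continuous_map T euclideanreal \<psi>0" "c0 \<le> 0"
     "\<forall>y\<in>V. \<forall>t. f y \<le> ereal t \<longrightarrow> \<psi>0 y + c0 * t < \<psi>0 y0 + c0 * (t0 - 2)"
    using FM_sep[OF lcs fcv lsc y0V y0t y0V, of "t0 - 1" "t0 - 2"] y0t by auto
  have "c0 \<noteq> 0"
  proof
    assume "c0 = 0"
    then show False using s0(4) y0V y0t by force
  qed
  then have c0n: "c0 < 0" using s0(3) by simp
  obtain \<phi>0 a0 where g: "lin V \<phi>0" "continuous_map T euclideanreal \<phi>0"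
      "\<forall>y\<in>V. ereal (\<phi>0 y + a0) \<le> f y"
    using FM_conv[OF sub s0(1,2) c0n nm s0(4)] by blast
  obtain s where s: "r < s" "ereal s < f x0"
  proof (cases "f x0")
    case (real v)
    then show ?thesis using that[of "(r + v) / 2"] x0 by simp
  next
    case PInf then show ?thesis using that[of "r + 1"] by simp
  next
    case MInf then show ?thesis using x0 by simp
  qed
  define \<tau>0 where "\<tau>0 = (r + s) / 2"
  have tau: "\<tau>0 < s" "r < \<tau>0" using s by (auto simp: \<tau>0_def)
  obtain \<psi> c where sp: "lin V \<psi>" "continuous_map T euclideanreal \<psi>" "c \<le> 0"
     "\<forall>y\<in>V. \<forall>t. f y \<le> ereal t \<longrightarrow> \<psi> y + c * t < \<psi> x0 + c * \<tau>0"
     "c = 0 \<longrightarrow> (\<exists>\<delta>>0. \<forall>y\<in>V. \<forall>t. f y \<le> ereal t \<longrightarrow> \<psi> y \<le> \<psi> x0 - \<delta>)"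
    using FM_sep[OF lcs fcv lsc y0V y0t x0(1) s(2) tau(1)] by blast
  show ?thesis
  proof (cases "c = 0")
    case False
    then have "c < 0" using sp(3) by simp
    from FM_conv[OF sub sp(1,2) this nm sp(4)] obtain \<phi> a where
      "lin V \<phi>" "continuous_map T euclideanreal \<phi>" "\<forall>y\<in>V. ereal (\<phi> y + a) \<le> f y" "\<phi> x0 + a = \<tau>0"
      by blast
    then show ?thesis using tau by (intro exI[of _ \<phi>] exI[of _ a]) auto
  next
    case True
    then obtain \<delta> where \<delta>: "\<delta> > 0" "\<forall>y\<in>V. \<forall>t. f y \<le> ereal t \<longrightarrow> \<psi> y \<le> \<psi> x0 - \<delta>"
      using sp(5) by blast
    define l where "l = max 0 ((r - \<phi>0 x0 - a0) / \<delta> + 1)"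
    define \<phi> where "\<phi> y = \<phi>0 y + l * \<psi> y" for y
    define a where "a = a0 + l * (\<delta> - \<psi> x0)"
    have l0: "l \<ge> 0" by (simp add: l_def)
    have lin\<phi>: "lin V \<phi>" using g(1) sp(1) unfolding lin_def \<phi>_def by (simp add: algebra_simps)
    have cont\<phi>: "continuous_map T euclideanreal \<phi>"
      unfolding \<phi>_def[abs_def] by (intro continuous_map_add continuous_map_real_mult_left g(2) sp(2))
    have minor: "ereal (\<phi> y + a) \<le> f y" if y: "y \<in> V" for y
    proof (cases "f y")
      case (real t)
      have "f y \<le> ereal t" using real by simp
      then have "\<psi> y \<le> \<psi> x0 - \<delta>" using \<delta>(2) y by blast
      then have "l * (\<psi> y - \<psi> x0 + \<delta>) \<le> 0" using l0 by (simp add: mult_nonneg_nonpos)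
      then have "\<phi> y + a \<le> \<phi>0 y + a0" unfolding \<phi>_def a_def by (simp add: algebra_simps)
      also have "ereal (\<phi>0 y + a0) \<le> f y" using g(3) y by blast
      finally show ?thesis by simp
    next
      case PInf then show ?thesis by simp
    next
      case MInf then show ?thesis using nm y by simp
    qed
    have "((r - \<phi>0 x0 - a0) / \<delta> + 1) * \<delta> \<le> l * \<delta>"
      using \<delta>(1) by (intro mult_right_mono) (auto simp: l_def)
    moreover have "((r - \<phi>0 x0 - a0) / \<delta> + 1) * \<delta> = r - \<phi>0 x0 - a0 + \<delta>"
      using \<delta>(1) by (simp add: field_simps)
    ultimately have "r < \<phi> x0 + a" using \<delta>(1) unfolding \<phi>_def a_def by (simp add: algebra_simps)
    then show ?thesis using lin\<phi> cont\<phi> minor by blast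
  qed
qed

instantiation "fun" :: (type, real_vector) real_vector
begin
definition scaleR_fun :: "real \<Rightarrow> ('a \<Rightarrow> 'b) \<Rightarrow> 'a \<Rightarrow> 'b" where
  "scaleR_fun c f = (\<lambda>x. c *\<^sub>R f x)"
instance by standard (auto simp: scaleR_fun_def fun_eq_iff algebra_simps)
end

lemma fun_add_eq: "(\<lambda>\<omega>. f \<omega> + g \<omega>) = (f + g :: 'a \<Rightarrow> real)"
  by (simp add: plus_fun_def)

lemma fun_smul_eq: "(\<lambda>\<omega>. a * f \<omega>) = (a *\<^sub>R f :: 'a \<Rightarrow> real)"
  by (simp add: scaleR_fun_def)

lemma fun_cvx_eq: "(\<lambda>\<omega>. t * f \<omega> + (1 - t) * g \<omega>) = (t *\<^sub>R f + (1 - t) *\<^sub>R g :: 'a \<Rightarrow> real)"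
  by (simp add: scaleR_fun_def plus_fun_def)

lemma lctvs_lcs:
  assumes "lctvs (V :: ('a \<Rightarrow> real) set) T"
  shows "lcs V T"
proof -
  have e1: "(\<lambda>(f, g). \<lambda>\<omega>. f \<omega> + g \<omega>) = (\<lambda>(x, y). x + (y :: 'a \<Rightarrow> real))"
    by (rule ext) (simp add: split_beta plus_fun_def)
  have e2: "(\<lambda>(a, f). \<lambda>\<omega>. a * f \<omega>) = (\<lambda>(a, x). a *\<^sub>R (x :: 'a \<Rightarrow> real))"
    by (rule ext) (simp add: split_beta scaleR_fun_def)
  have z: "(\<lambda>\<omega>. 0) = (0 :: 'a \<Rightarrow> real)" by (simp add: zero_fun_def)
  note L = assms[unfolded lctvs_def]
  note L1 = conjunct1[OF L]
  note L2 = conjunct1[OF conjunct2[OF L]]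
  note L3 = conjunct1[OF conjunct2[OF conjunct2[OF L]]]
  note L4 = conjunct1[OF conjunct2[OF conjunct2[OF conjunct2[OF L]]]]
  note L5 = conjunct1[OF conjunct2[OF conjunct2[OF conjunct2[OF conjunct2[OF L]]]]]
  note L6 = conjunct1[OF conjunct2[OF conjunct2[OF conjunct2[OF conjunct2[OF conjunct2[OF L]]]]]]
  note L8 = conjunct2[OF conjunct2[OF conjunct2[OF conjunct2[OF conjunct2[OF conjunct2[OF conjunct2[OF L]]]]]]]
  have sub: "subsp V" unfolding subsp_def
  proof (intro conjI ballI allI)
    show "0 \<in> V" using L2 z by simp
    fix x y assume "x \<in> V" "y \<in> V"
    have "\<forall>f\<in>V. \<forall>g\<in>V. f + g \<in> V" using L3 by (simp add: plus_fun_def)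
    then show "x + y \<in> V" using \<open>x \<in> V\<close> \<open>y \<in> V\<close> by blast
  next
    fix c x assume "x \<in> V"
    have "\<forall>a. \<forall>f\<in>V. a *\<^sub>R f \<in> V" using L4 by (simp add: scaleR_fun_def)
    then show "c *\<^sub>R x \<in> V" using \<open>x \<in> V\<close> by blast
  qed
  have L8': "\<forall>x\<in>V. \<forall>U. openin T U \<and> x \<in> U \<longrightarrow> (\<exists>W. openin T W \<and> x \<in> W \<and> W \<subseteq> U \<and>
      (\<forall>f\<in>W. \<forall>g\<in>W. \<forall>t::real. 0 \<le> t \<and> t \<le> 1 \<longrightarrow> t *\<^sub>R f + (1 - t) *\<^sub>R g \<in> W))"
    unfolding fun_cvx_eq[symmetric] by (rule L8)
  have lc: "\<forall>x\<in>V. \<forall>U. openin T U \<and> x \<in> U \<longrightarrow> (\<exists>W. openin T W \<and> x \<in> W \<and> W \<subseteq> U \<and> cvx W)"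
  proof (intro ballI allI impI)
    fix x U assume xV: "x \<in> V" and hU: "openin T U \<and> x \<in> U"
    show "\<exists>W. openin T W \<and> x \<in> W \<and> W \<subseteq> U \<and> cvx W"
      using L8'[rule_format, OF xV hU] unfolding cvx_def .
  qed
  show ?thesis unfolding lcs_def
    by (intro conjI L1 sub L5[unfolded e1] L6[unfolded e2] lc)
qed

lemma expv_lnv: "(\<forall>\<omega>. 0 < X \<omega>) \<Longrightarrow> expv (lnv X) = X"
  by (simp add: expv_def lnv_def)

lemma lnv_expv: "lnv (expv Y) = Y"
  by (simp add: expv_def lnv_def)

lemma lnv_inj: "(\<forall>\<omega>. 0 < X \<omega>) \<Longrightarrow> (\<forall>\<omega>. 0 < Y \<omega>) \<Longrightarrow> lnv X = lnv Y \<Longrightarrow> X = Y"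
  by (metis expv_lnv)

lemma eexp_inf [simp]: "eexp \<infinity> = \<infinity>" and eexp_minf [simp]: "eexp (- \<infinity>) = 0"
  using eexp.simps(2,3) by simp_all

lemma eexp_mono: "x \<le> y \<Longrightarrow> eexp x \<le> eexp y"
  by (cases x; cases y) auto

lemma eexp_nonneg: "0 \<le> eexp x"
  by (cases x) auto

theorem mainTheorem13:
  fixes M :: "'a measure"
    and C S K :: "('a \<Rightarrow> real) set"
    and Tlog :: "('a \<Rightarrow> real) topology"
    and \<pi> :: "('a \<Rightarrow> real) \<Rightarrow> real"
    and \<rho>t :: "('a \<Rightarrow> real) \<Rightarrow> real"
  assumes "prob_space M"
    and "C \<noteq> {}" "S \<noteq> {}" "K \<noteq> {}"
    and "C \<subseteq> L0pp M" "S \<subseteq> L0pp M" "K \<subseteq> L0pp M"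
    and "\<forall>X\<in>C. \<forall>Z\<in>S. (\<lambda>\<omega>. X \<omega> / Z \<omega>) \<in> K"
    and "\<forall>X\<in>K. \<forall>l::real. l > 0 \<longrightarrow> (\<lambda>\<omega>. l * X \<omega>) \<in> K"
    and "\<forall>X\<in>C. \<forall>Y\<in>C. (\<lambda>\<omega>. X \<omega> * Y \<omega>) \<in> C"
    and "\<forall>X\<in>C. (\<lambda>\<omega>. 1 / X \<omega>) \<in> C"
    and "K \<subseteq> C" "S \<subseteq> C"
    and "\<forall>Z\<in>S. 0 < \<pi> Z"
    and "lctvs (lnv ` C) Tlog"
    and "RRM M K \<rho>t"
    and "proper_on (lnv ` C)
           (rho_add {Y \<in> lnv ` K. ln (\<rho>t (expv Y)) \<le> 0} (lnv ` S) (\<lambda>L. ln (\<pi> (expv L))))"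
    and "convex_on_ereal (lnv ` C)
           (rho_add {Y \<in> lnv ` K. ln (\<rho>t (expv Y)) \<le> 0} (lnv ` S) (\<lambda>L. ln (\<pi> (expv L))))"
    and "lsc_on Tlog
           (rho_add {Y \<in> lnv ` K. ln (\<rho>t (expv Y)) \<le> 0} (lnv ` S) (\<lambda>L. ln (\<pi> (expv L))))"
  shows "\<forall>X\<in>C. marrm (acc_set K \<rho>t) S \<pi> X =
     (SUP \<phi> \<in> {\<phi>. log_linear C \<phi> \<and> continuous_map (tau_of C Tlog) euclideanreal \<phi> \<and>
                  (\<forall>Y\<in>C \<inter> K. (AE \<omega> in M. 1 \<le> Y \<omega>) \<longrightarrow> 0 \<le> \<phi> Y)}.
        eexp (ereal (\<phi> X) - (SUP Y \<in> acc_set K \<rho>t. ereal (\<phi> Y))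
                            - (SUP Z \<in> S. ereal (\<phi> Z - ln (\<pi> Z)))))"
proof -
  note cpos = assms(5) and spos = assms(6) and kpos = assms(7)
  have L0D: "\<And>X. X \<in> L0pp M \<Longrightarrow> (\<forall>\<omega>. 0 < X \<omega>) \<and> X \<in> borel_measurable M"
    by (simp add: L0pp_def)
  have posC: "\<And>X. X \<in> C \<Longrightarrow> \<forall>\<omega>. 0 < X \<omega>" using cpos L0D by blast
  have KC: "K \<subseteq> C" and SC: "S \<subseteq> C" using assms(12,13) .
  have piS: "\<And>Z. Z \<in> S \<Longrightarrow> 0 < \<pi> Z" using assms(14) by blast
  have quot: "\<And>X Z. X \<in> C \<Longrightarrow> Z \<in> S \<Longrightarrow> (\<lambda>\<omega>. X \<omega> / Z \<omega>) \<in> K" using assms(8) by blast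
  have rrm: "RRM M K \<rho>t" by (rule assms(16))
  have LinfK: "Linfpp M \<subseteq> K" and rpos: "\<And>X. X \<in> K \<Longrightarrow> 0 < \<rho>t X"
    and rmono: "\<And>X Y. X \<in> K \<Longrightarrow> Y \<in> K \<Longrightarrow> (AE \<omega> in M. X \<omega> \<le> Y \<omega>) \<Longrightarrow> \<rho>t X \<le> \<rho>t Y"
    and r1: "\<rho>t (\<lambda>\<omega>. 1) = 1"
    using rrm unfolding RRM_def by blast+
  define V where "V = lnv ` C"
  define A\<nu> where "A\<nu> = {Y \<in> lnv ` K. ln (\<rho>t (expv Y)) \<le> 0}"
  define \<pi>l where "\<pi>l = (\<lambda>L. ln (\<pi> (expv L)))"
  define \<rho> where "\<rho> = rho_add A\<nu> (lnv ` S) \<pi>l"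
  define B where "B = acc_set K \<rho>t"
  have lcs: "lcs V Tlog" unfolding V_def by (rule lctvs_lcs[OF assms(15)])
  have sub: "subsp V" and top: "topspace Tlog = V" using lcs by (auto simp: lcs_def)
  have lnvC: "\<And>X. X \<in> C \<Longrightarrow> lnv X \<in> V" unfolding V_def by blast
  have BK: "B \<subseteq> K" unfolding B_def acc_set_def by blast
  have memB: "\<And>Y. Y \<in> B \<longleftrightarrow> Y \<in> K \<and> \<rho>t Y \<le> 1" unfolding B_def acc_set_def by blast
  have one: "(\<lambda>\<omega>. 1::real) \<in> Linfpp M"
    unfolding Linfpp_def L0pp_def by (auto intro: exI[of _ 1])
  have oneK: "(\<lambda>\<omega>. 1::real) \<in> K" using one LinfK by blast
  have oneB: "(\<lambda>\<omega>. 1::real) \<in> B" using oneK r1 memB by simp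
  have fcv: "ecvx V \<rho>"
    unfolding ecvx_def
  proof (intro ballI allI impI)
    fix x y and t :: real assume xy: "x \<in> V" "y \<in> V" and t: "0 < t \<and> t < 1"
    have e: "(\<lambda>\<omega>. t * x \<omega> + (1 - t) * y \<omega>) = t *\<^sub>R x + (1 - t) *\<^sub>R y" by (rule fun_cvx_eq)
    have "\<rho> (\<lambda>\<omega>. t * x \<omega> + (1 - t) * y \<omega>) \<le> ereal t * \<rho> x + ereal (1 - t) * \<rho> y"
      using assms(18) xy t unfolding convex_on_ereal_def \<rho>_def A\<nu>_def \<pi>l_def V_def by blast
    then show "\<rho> (t *\<^sub>R x + (1 - t) *\<^sub>R y) \<le> ereal t * \<rho> x + ereal (1 - t) * \<rho> y"
      unfolding e .
  qed
  have lsc: "\<forall>c. closedin Tlog {x \<in> V. \<rho> x \<le> ereal c}"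
    using assms(19) top unfolding lsc_on_def \<rho>_def A\<nu>_def \<pi>l_def V_def by simp
  have nm: "\<forall>x\<in>V. \<rho> x \<noteq> -\<infinity>" and fin: "\<exists>x\<in>V. \<rho> x \<noteq> \<infinity>"
    using assms(17) unfolding proper_on_def \<rho>_def A\<nu>_def \<pi>l_def V_def by blast+
  have R1: "\<rho> (lnv Y + lnv Z) \<le> ereal (ln (\<pi> Z))" if Y: "Y \<in> B" and Z: "Z \<in> S" for Y Z
  proof -
    have YK: "Y \<in> K" using Y BK by blast
    have Ypos: "\<forall>\<omega>. 0 < Y \<omega>" using YK KC posC by blast
    have Zpos: "\<forall>\<omega>. 0 < Z \<omega>" using Z SC posC by blast
    have e1: "(\<lambda>\<omega>. (lnv Y + lnv Z) \<omega> - lnv Z \<omega>) = lnv Y" by (simp add: plus_fun_def)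
    have "0 < \<rho>t Y" "\<rho>t Y \<le> 1" using rpos YK Y memB by auto
    then have "ln (\<rho>t (expv (lnv Y))) \<le> 0" using expv_lnv[OF Ypos] by simp
    then have "(\<lambda>\<omega>. (lnv Y + lnv Z) \<omega> - lnv Z \<omega>) \<in> A\<nu>" unfolding e1 A\<nu>_def using YK by blast
    moreover have "lnv Z \<in> lnv ` S" using Z by blast
    ultimately have "ereal (\<pi>l (lnv Z)) \<in> {ereal (\<pi>l L) | L. L \<in> lnv ` S \<and> (\<lambda>\<omega>. (lnv Y + lnv Z) \<omega> - L \<omega>) \<in> A\<nu>}"
      by blast
    then have "\<rho> (lnv Y + lnv Z) \<le> ereal (\<pi>l (lnv Z))"
      unfolding \<rho>_def rho_add_def by (rule Inf_lower)
    also have "\<pi>l (lnv Z) = ln (\<pi> Z)" unfolding \<pi>l_def using expv_lnv[OF Zpos] by simp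
    finally show ?thesis .
  qed
  have R2: "ereal (ln r) \<le> \<rho> (lnv X)"
    if X: "X \<in> C" and r: "0 < r" and bnd: "\<forall>Z\<in>S. (\<lambda>\<omega>. X \<omega> / Z \<omega>) \<in> B \<longrightarrow> r \<le> \<pi> Z" for X r
    unfolding \<rho>_def rho_add_def
  proof (rule Inf_greatest)
    fix e assume "e \<in> {ereal (\<pi>l L) | L. L \<in> lnv ` S \<and> (\<lambda>\<omega>. lnv X \<omega> - L \<omega>) \<in> A\<nu>}"
    then obtain Z where Z: "Z \<in> S" and e: "e = ereal (\<pi>l (lnv Z))" and A: "(\<lambda>\<omega>. lnv X \<omega> - lnv Z \<omega>) \<in> A\<nu>"
      by blast
    have Xpos: "\<forall>\<omega>. 0 < X \<omega>" using X posC by blast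
    have Zpos: "\<forall>\<omega>. 0 < Z \<omega>" using Z SC posC by blast
    have ex: "expv (\<lambda>\<omega>. lnv X \<omega> - lnv Z \<omega>) = (\<lambda>\<omega>. X \<omega> / Z \<omega>)"
      using Xpos Zpos by (simp add: expv_def lnv_def exp_diff)
    have qK: "(\<lambda>\<omega>. X \<omega> / Z \<omega>) \<in> K" using quot X Z by blast
    have "ln (\<rho>t (expv (\<lambda>\<omega>. lnv X \<omega> - lnv Z \<omega>))) \<le> 0" using A unfolding A\<nu>_def by blast
    then have "ln (\<rho>t (\<lambda>\<omega>. X \<omega> / Z \<omega>)) \<le> 0" unfolding ex .
    moreover have "0 < \<rho>t (\<lambda>\<omega>. X \<omega> / Z \<omega>)" using rpos qK by blast
    ultimately have "\<rho>t (\<lambda>\<omega>. X \<omega> / Z \<omega>) \<le> 1" by simp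
    then have "(\<lambda>\<omega>. X \<omega> / Z \<omega>) \<in> B" using qK memB by blast
    then have "r \<le> \<pi> Z" using bnd Z by blast
    then have "ln r \<le> ln (\<pi> Z)" using r by simp
    moreover have "\<pi>l (lnv Z) = ln (\<pi> Z)" unfolding \<pi>l_def using expv_lnv[OF Zpos] by simp
    ultimately show "ereal (ln r) \<le> e" using e by simp
  qed
  define SB where "SB \<phi> = (SUP Y \<in> B. ereal (\<phi> Y))" for \<phi> :: "('a \<Rightarrow> real) \<Rightarrow> real"
  define SS where "SS \<phi> = (SUP Z \<in> S. ereal (\<phi> Z - ln (\<pi> Z)))" for \<phi> :: "('a \<Rightarrow> real) \<Rightarrow> real"
  define D where "D = {\<phi>. log_linear C \<phi> \<and> continuous_map (tau_of C Tlog) euclideanreal \<phi> \<and>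
                  (\<forall>Y\<in>C \<inter> K. (AE \<omega> in M. 1 \<le> Y \<omega>) \<longrightarrow> 0 \<le> \<phi> Y)}"
  define tm where "tm \<phi> X = eexp (ereal (\<phi> X) - SB \<phi> - SS \<phi>)" for \<phi> X
  have zeroD: "(\<lambda>Y. 0) \<in> D" unfolding D_def log_linear_def by simp
  have main: "marrm B S \<pi> X = (SUP \<phi>\<in>D. tm \<phi> X)" if X: "X \<in> C" for X
  proof (rule antisym)
    have Xpos: "\<forall>\<omega>. 0 < X \<omega>" using X posC by blast
    show "marrm B S \<pi> X \<le> (SUP \<phi>\<in>D. tm \<phi> X)"
    proof (rule dense_le)
      fix y assume y: "y < marrm B S \<pi> X"
      show "y \<le> (SUP \<phi>\<in>D. tm \<phi> X)"
      proof (cases y)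
        case MInf then show ?thesis by simp
      next
        case PInf then show ?thesis using y by simp
      next
        case (real r')
        show ?thesis
        proof (cases "r' \<le> 0")
          case True
          have "y \<le> 0" using True real by simp
          also have "0 \<le> tm (\<lambda>Y. 0) X" unfolding tm_def by (rule eexp_nonneg)
          also have "\<dots> \<le> (SUP \<phi>\<in>D. tm \<phi> X)" by (rule SUP_upper[OF zeroD])
          finally show ?thesis .
        next
          case False
          then have r'p: "0 < r'" by simp
          obtain z where z: "y < z" "z < marrm B S \<pi> X" using dense[OF y] by blast
          then obtain r'' where r'': "z = ereal r''" using real by (cases z) auto
          have rr: "r' < r''" using z r'' real by simp
          have bnd: "\<forall>Z\<in>S. (\<lambda>\<omega>. X \<omega> / Z \<omega>) \<in> B \<longrightarrow> r'' \<le> \<pi> Z"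
          proof (intro ballI impI)
            fix Z assume "Z \<in> S" "(\<lambda>\<omega>. X \<omega> / Z \<omega>) \<in> B"
            then have "marrm B S \<pi> X \<le> ereal (\<pi> Z)" unfolding marrm_def by (intro Inf_lower) blast
            moreover have "ereal r'' < marrm B S \<pi> X" using z(2) r'' by simp
            ultimately have "ereal r'' < ereal (\<pi> Z)" by (rule order.strict_trans2[rotated])
            then show "r'' \<le> \<pi> Z" by simp
          qed
          have "ereal (ln r'') \<le> \<rho> (lnv X)" by (rule R2[OF X _ bnd]) (use r'p rr in simp)
          moreover have "ereal (ln r') < ereal (ln r'')" using r'p rr by simp
          ultimately have lt: "ereal (ln r') < \<rho> (lnv X)" by (rule order.strict_trans2[rotated])
          note t1 = FM_affine[OF lcs]
          note t2 = t1[OF fcv]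
          note t3 = t2[OF lsc]
          note t4 = t3[OF nm]
          note t5 = t4[OF fin]
          note t6 = t5[OF lnvC[OF X]]
          note t7 = t6[OF lt]
          obtain \<psi> a where \<psi>: "lin V \<psi>" "continuous_map Tlog euclideanreal \<psi>"
              "\<forall>y\<in>V. ereal (\<psi> y + a) \<le> \<rho> y" "ln r' < \<psi> (lnv X) + a"
            using t7 by blast
          define \<phi> where "\<phi> Y = \<psi> (lnv Y)" for Y
          have bound: "\<phi> Y + (\<phi> Z - ln (\<pi> Z)) \<le> - a" if YZ: "Y \<in> B" "Z \<in> S" for Y Z
          proof -
            have YV: "lnv Y \<in> V" using YZ BK KC lnvC by blast
            have ZV: "lnv Z \<in> V" using YZ SC lnvC by blast
            have "ereal (\<psi> (lnv Y + lnv Z) + a) \<le> \<rho> (lnv Y + lnv Z)"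
              using \<psi>(3) subspD(2)[OF sub YV ZV] by blast
            also have "\<dots> \<le> ereal (ln (\<pi> Z))" by (rule R1[OF YZ])
            finally have "\<psi> (lnv Y + lnv Z) + a \<le> ln (\<pi> Z)" by simp
            moreover have "\<psi> (lnv Y + lnv Z) = \<phi> Y + \<phi> Z"
              unfolding \<phi>_def by (rule linD(1)[OF \<psi>(1) sub YV ZV])
            ultimately show ?thesis by simp
          qed
          obtain Z0 where Z0: "Z0 \<in> S" using assms(3) by blast
          have \<phi>1: "\<phi> (\<lambda>\<omega>. 1) = 0"
          proof -
            have l1: "lnv (\<lambda>\<omega>. 1::real) = 0" by (simp add: lnv_def zero_fun_def)
            show ?thesis unfolding \<phi>_def l1 by (rule linD(5)[OF \<psi>(1) sub])
          qed
          have SBlo: "ereal 0 \<le> SB \<phi>" unfolding SB_def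
            using SUP_upper[OF oneB, of "\<lambda>Y. ereal (\<phi> Y)"] \<phi>1 by simp
          have SBhi: "SB \<phi> \<le> ereal (- a - (\<phi> Z - ln (\<pi> Z)))" if ZS: "Z \<in> S" for Z
            unfolding SB_def
          proof (rule SUP_least)
            fix Y assume "Y \<in> B"
            then have "\<phi> Y + (\<phi> Z - ln (\<pi> Z)) \<le> - a" by (rule bound[OF _ ZS])
            then show "ereal (\<phi> Y) \<le> ereal (- a - (\<phi> Z - ln (\<pi> Z)))" by simp
          qed
          obtain b where b: "SB \<phi> = ereal b" using SBlo SBhi[OF Z0] by (cases "SB \<phi>") auto
          have hb: "b \<le> - a - (\<phi> Z - ln (\<pi> Z))" if "Z \<in> S" for Z using SBhi[OF that] b by simp
          have SShi: "SS \<phi> \<le> ereal (- a - b)" unfolding SS_def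
          proof (rule SUP_least)
            fix Z assume "Z \<in> S"
            then show "ereal (\<phi> Z - ln (\<pi> Z)) \<le> ereal (- a - b)" using hb[of Z] by simp
          qed
          have SSlo: "ereal (\<phi> Z0 - ln (\<pi> Z0)) \<le> SS \<phi>" unfolding SS_def by (rule SUP_upper[OF Z0])
          obtain cc where cc: "SS \<phi> = ereal cc" using SSlo SShi by (cases "SS \<phi>") auto
          have ccb: "cc \<le> - a - b" using SShi cc by simp
          have tmv: "tm \<phi> X = ereal (exp (\<phi> X - b - cc))" unfolding tm_def b cc by simp
          have rexp: "r' < exp (\<phi> X - b - cc)"
          proof -
            have "ln r' < \<phi> X - b - cc" using \<psi>(4) ccb unfolding \<phi>_def by simp
            then have "exp (ln r') < exp (\<phi> X - b - cc)" by simp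
            then show ?thesis using r'p by simp
          qed
          have phiD: "\<phi> \<in> D" unfolding D_def
          proof (intro CollectI conjI ballI impI)
            show "log_linear C \<phi>" unfolding log_linear_def
            proof (intro ballI allI)
              fix X1 Y1 and \<alpha> \<beta> :: real assume X1: "X1 \<in> C" and Y1: "Y1 \<in> C"
              have e: "lnv (\<lambda>\<omega>. X1 \<omega> powr \<alpha> * Y1 \<omega> powr \<beta>) = \<alpha> *\<^sub>R lnv X1 + \<beta> *\<^sub>R lnv Y1"
              proof (rule ext)
                fix \<omega>
                have "0 < X1 \<omega>" "0 < Y1 \<omega>" using posC X1 Y1 by auto
                then show "lnv (\<lambda>\<omega>. X1 \<omega> powr \<alpha> * Y1 \<omega> powr \<beta>) \<omega> = (\<alpha> *\<^sub>R lnv X1 + \<beta> *\<^sub>R lnv Y1) \<omega>"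
                  by (simp add: lnv_def scaleR_fun_def plus_fun_def ln_mult)
              qed
              have X1V: "lnv X1 \<in> V" and Y1V: "lnv Y1 \<in> V" using lnvC X1 Y1 by auto
              show "\<phi> (\<lambda>\<omega>. X1 \<omega> powr \<alpha> * Y1 \<omega> powr \<beta>) = \<alpha> * \<phi> X1 + \<beta> * \<phi> Y1"
                unfolding \<phi>_def e
                using linD(1)[OF \<psi>(1) sub subspD(3)[OF sub X1V] subspD(3)[OF sub Y1V]]
                  linD(2)[OF \<psi>(1) sub X1V] linD(2)[OF \<psi>(1) sub Y1V] by simp
            qed
            have "continuous_map (pullback_topology C lnv Tlog) euclideanreal (\<psi> \<circ> lnv)"
              by (rule continuous_map_pullback[OF \<psi>(2)])
            then show "continuous_map (tau_of C Tlog) euclideanreal \<phi>"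
              unfolding tau_of_def \<phi>_def[abs_def] o_def .
          next
            fix Y assume YCK: "Y \<in> C \<inter> K" and AE1: "AE \<omega> in M. 1 \<le> Y \<omega>"
            show "0 \<le> \<phi> Y"
            proof (rule ccontr)
              assume "\<not> 0 \<le> \<phi> Y"
              then have neg: "\<phi> Y < 0" by simp
              define k where "k = (\<bar>b\<bar> + 1) / (- \<phi> Y)"
              have kp: "0 < k" unfolding k_def using neg by (intro divide_pos_pos) auto
              define W where "W = (\<lambda>\<omega>. Y \<omega> powr (- k))"
              have YL: "Y \<in> L0pp M" using YCK kpos by blast
              have Ypos: "\<forall>\<omega>. 0 < Y \<omega>" and Ymeas: "Y \<in> borel_measurable M" using L0D[OF YL] by auto
              have Wmeas: "W \<in> borel_measurable M" unfolding W_def using Ymeas by measurable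
              have Wpos: "\<forall>\<omega>. 0 < W \<omega>" unfolding W_def using Ypos by (simp add: less_imp_neq[symmetric])
              have WAE: "AE \<omega> in M. W \<omega> \<le> 1"
                using AE1
              proof (rule eventually_mono)
                fix \<omega> assume "1 \<le> Y \<omega>"
                then have "1 \<le> Y \<omega> powr k" using kp by (intro ge_one_powr_ge_zero) auto
                then show "W \<omega> \<le> 1" unfolding W_def powr_minus by (simp add: inverse_le_1_iff)
              qed
              have WL: "W \<in> Linfpp M" unfolding Linfpp_def L0pp_def using Wmeas Wpos WAE by blast
              have WK: "W \<in> K" using WL LinfK by blast
              have "\<rho>t W \<le> \<rho>t (\<lambda>\<omega>. 1)" by (rule rmono[OF WK oneK WAE])
              then have WB: "W \<in> B" using WK r1 memB by simp
              have YV: "lnv Y \<in> V" using YCK lnvC by blast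
              have lW: "lnv W = (- k) *\<^sub>R lnv Y" by (simp add: W_def lnv_def scaleR_fun_def fun_eq_iff)
              have "\<phi> W = - k * \<phi> Y" unfolding \<phi>_def lW by (rule linD(2)[OF \<psi>(1) sub YV])
              also have "\<dots> = \<bar>b\<bar> + 1" using neg by (simp add: k_def)
              finally have "\<phi> W = \<bar>b\<bar> + 1" .
              moreover have "ereal (\<phi> W) \<le> SB \<phi>" unfolding SB_def by (rule SUP_upper[OF WB])
              ultimately show False using b by simp
            qed
          qed
          have "y \<le> tm \<phi> X" using tmv rexp real by simp
          also have "\<dots> \<le> (SUP \<phi>\<in>D. tm \<phi> X)" by (rule SUP_upper[OF phiD])
          finally show ?thesis .
        qed
      qed
    qed
    show "(SUP \<phi>\<in>D. tm \<phi> X) \<le> marrm B S \<pi> X"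
    proof (rule SUP_least)
      fix \<phi> assume \<phi>: "\<phi> \<in> D"
      have ll: "log_linear C \<phi>" using \<phi> D_def by blast
      show "tm \<phi> X \<le> marrm B S \<pi> X" unfolding marrm_def
      proof (rule Inf_greatest)
        fix e assume "e \<in> {ereal (\<pi> Z) | Z. Z \<in> S \<and> (\<lambda>\<omega>. X \<omega> / Z \<omega>) \<in> B}"
        then obtain Z where Z: "Z \<in> S" "(\<lambda>\<omega>. X \<omega> / Z \<omega>) \<in> B" and e: "e = ereal (\<pi> Z)" by blast
        have ZC: "Z \<in> C" using Z SC by blast
        have QC: "(\<lambda>\<omega>. X \<omega> / Z \<omega>) \<in> C" using Z(2) BK KC by blast
        have Zpos: "\<forall>\<omega>. 0 < Z \<omega>" using ZC posC by blast
        have eq: "(\<lambda>\<omega>. (X \<omega> / Z \<omega>) powr 1 * Z \<omega> powr 1) = X"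
        proof (rule ext)
          fix \<omega>
          have "0 < X \<omega>" "0 < Z \<omega>" using Xpos Zpos by auto
          then show "(X \<omega> / Z \<omega>) powr 1 * Z \<omega> powr 1 = X \<omega>" by simp
        qed
        have "\<phi> (\<lambda>\<omega>. (X \<omega> / Z \<omega>) powr 1 * Z \<omega> powr 1) = 1 * \<phi> (\<lambda>\<omega>. X \<omega> / Z \<omega>) + 1 * \<phi> Z"
          by (rule ll[unfolded log_linear_def, rule_format, OF QC ZC])
        then have eqp: "\<phi> X = \<phi> (\<lambda>\<omega>. X \<omega> / Z \<omega>) + \<phi> Z" unfolding eq by simp
        have s1: "ereal (\<phi> (\<lambda>\<omega>. X \<omega> / Z \<omega>)) \<le> SB \<phi>" unfolding SB_def by (rule SUP_upper[OF Z(2)])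
        have s2: "ereal (\<phi> Z - ln (\<pi> Z)) \<le> SS \<phi>" unfolding SS_def by (rule SUP_upper[OF Z(1)])
        have "ereal (\<phi> X) - SB \<phi> \<le> ereal (\<phi> X) - ereal (\<phi> (\<lambda>\<omega>. X \<omega> / Z \<omega>))"
          by (rule ereal_minus_mono[OF order_refl s1])
        then have "ereal (\<phi> X) - SB \<phi> - SS \<phi> \<le> ereal (\<phi> X) - ereal (\<phi> (\<lambda>\<omega>. X \<omega> / Z \<omega>)) - ereal (\<phi> Z - ln (\<pi> Z))"
          by (rule ereal_minus_mono[OF _ s2])
        also have "\<dots> = ereal (ln (\<pi> Z))" using eqp by simp
        finally have "tm \<phi> X \<le> eexp (ereal (ln (\<pi> Z)))" unfolding tm_def by (rule eexp_mono)
        also have "\<dots> = ereal (\<pi> Z)" using piS[OF Z(1)] by simp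
        finally show "tm \<phi> X \<le> e" using e by simp
      qed
    qed
  qed
  show ?thesis
    using main unfolding B_def D_def tm_def SB_def SS_def by blast
qed

end
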